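(* Let $W$ be the affine Weyl group of type $A_n^{(1)}$ and $N\in\mathbb{N}$. The number of elements of $\widehat{\mathcal{B}}(N)=\{v\in\Sigma W^0\mid\mathcal{L}_{\Lambda_0}(v)=N\}$ is divisible by $n+1$.
   Context: Affine Kac–Moody setting of type $A_n^{(1)}$: $\mathfrak h^*$ contains simple roots $\alpha_0,\dots,\alpha_n$, null root $\delta=\sum_i\alpha_i$, affine fundamental weight $\Lambda_0$; $c=\sum_i\alpha_i^\vee$; $\rho^\vee\in\mathfrak h$ with $\langle\alpha_i,\rho^\vee\rangle=1$ for all $i$. $V_0=\bigoplus_{i=1}^n\mathbb{R}\alpha_i\cong\{x\in\mathbb{R}^{n+1}\mid\sum x_i=0\}$ via $\alpha_i=\varepsilon_i-\varepsilon_{i+1}$, standard dot product. For $x\in V_0$, $t_x(v)=v+\langle v,c\rangle x-((v|x)+\frac12|x|^2\langle v,c\rangle)\delta$. $W_0=\langle s_1,\dots,s_n\rangle$, $M=V_0\cap\mathbb{Z}^{n+1}$, $W=\langle s_0,\dots,s_n\rangle=T(M)\rtimes W_0$, $W^0=\{w\in W\mid \ell(ws_k)>\ell(w)\ \forall k=1,\dots,n\}$. Fundamental weights $\omega_i=(\varepsilon_1+\dots+\varepsilon_i)-\frac{i}{n+1}\sum_{k=1}^{n+1}\varepsilon_k$. $\sigma_0=e$, $\sigma_j=t_{\omega_j}w_{0,j}w_0$ for $1\le j\le n$ ($w_0$ longest element of $W_0$, $w_{0,j}$ longest element of the parabolic subgroup generated by $s_i$, $1\le i\le n$, $i\ne j$);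 $\Sigma=\{\sigma_0,\dots,\sigma_n\}$ and $\Sigma W^0=\{\sigma w\mid\sigma\in\Sigma,w\in W^0\}$. $\mathcal{L}_{\Lambda_0}(g)=\langle\Lambda_0-g\Lambda_0,\rho^\vee\rangle$ for $g\in GL(\mathfrak h^* )$. *)

theory Defs
  imports Complex_Main
begin

text \<open>Concrete model of \<open>h^*\<close> for type \<open>A_n^(1)\<close>:
  a triple \<open>(a, x, b)\<close> stands for \<open>a \<Lambda>_0 + x + b \<delta>\<close>, where the finite part
  \<open>x\<close> is a vector in \<open>R^(n+1)\<close> given by its coordinates \<open>x 1, ..., x (n+1)\<close>
  (the finite part of a genuine element of \<open>h^*\<close> lies in \<open>V_0\<close>, i.e. has
  coordinate sum zero and vanishing coordinates outside \<open>1..n+1\<close>; all maps below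
  act on the full type and preserve this subspace).\<close>

type_synonym hdual = "real \<times> (nat \<Rightarrow> real) \<times> real"

definition eps :: "nat \<Rightarrow> nat \<Rightarrow> real" where
  "eps i = (\<lambda>k. if k = i then 1 else 0)"

definition Lam0 :: hdual where "Lam0 = (1, (\<lambda>_. 0), 0)"
definition delta :: hdual where "delta = (0, (\<lambda>_. 0), 1)"

definition hadd :: "hdual \<Rightarrow> hdual \<Rightarrow> hdual" where
  "hadd u v = (fst u + fst v, (\<lambda>k. fst (snd u) k + fst (snd v) k), snd (snd u) + snd (snd v))"

definition hscale :: "real \<Rightarrow> hdual \<Rightarrow> hdual" where
  "hscale r v = (r * fst v, (\<lambda>k. r * fst (snd v) k), r * snd (snd v))"

definition hdiff :: "hdual \<Rightarrow> hdual \<Rightarrow> hdual" where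
  "hdiff u v = hadd u (hscale (-1) v)"

definition dot :: "nat \<Rightarrow> (nat \<Rightarrow> real) \<Rightarrow> (nat \<Rightarrow> real) \<Rightarrow> real" where
  "dot n x y = (\<Sum>k = 1..n+1. x k * y k)"

definition bform :: "nat \<Rightarrow> hdual \<Rightarrow> hdual \<Rightarrow> real" where
  "bform n u v = fst u * snd (snd v) + snd (snd u) * fst v + dot n (fst (snd u)) (fst (snd v))"

text \<open>Simple roots: \<open>\<alpha>_i = \<epsilon>_i - \<epsilon>_(i+1)\<close> for \<open>1 \<le> i \<le> n\<close>,
  \<open>\<alpha>_0 = \<delta> - \<theta> = \<delta> - (\<epsilon>_1 - \<epsilon>_(n+1))\<close>.\<close>
definition alpha :: "nat \<Rightarrow> nat \<Rightarrow> hdual" where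
  "alpha n i = (if i = 0 then (0, (\<lambda>k. eps (n+1) k - eps 1 k), 1)
                else (0, (\<lambda>k. eps i k - eps (i+1) k), 0))"

text \<open>Simple reflections \<open>s_i(v) = v - \<langle>v, \<alpha>_i^\<or>\<rangle> \<alpha>_i = v - (v|\<alpha>_i) \<alpha>_i\<close>.\<close>
definition sref :: "nat \<Rightarrow> nat \<Rightarrow> hdual \<Rightarrow> hdual" where
  "sref n i v = hdiff v (hscale (bform n v (alpha n i)) (alpha n i))"

definition wordfun :: "nat \<Rightarrow> nat list \<Rightarrow> hdual \<Rightarrow> hdual" where
  "wordfun n ws = foldr (\<lambda>i f. sref n i \<circ> f) ws id"

definition WJ :: "nat \<Rightarrow> nat set \<Rightarrow> (hdual \<Rightarrow> hdual) set" where
  "WJ n J = {wordfun n ws | ws. set ws \<subseteq> J}"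

definition Waff :: "nat \<Rightarrow> (hdual \<Rightarrow> hdual) set" where
  "Waff n = WJ n {0..n}"

definition Wfin :: "nat \<Rightarrow> (hdual \<Rightarrow> hdual) set" where
  "Wfin n = WJ n {1..n}"

definition len :: "nat \<Rightarrow> (hdual \<Rightarrow> hdual) \<Rightarrow> nat" where
  "len n w = (LEAST k. \<exists>ws. set ws \<subseteq> {0..n} \<and> length ws = k \<and> wordfun n ws = w)"

definition Wmin :: "nat \<Rightarrow> (hdual \<Rightarrow> hdual) set" where
  "Wmin n = {w \<in> Waff n. \<forall>k \<in> {1..n}. len n (w \<circ> sref n k) > len n w}"

definition longest :: "nat \<Rightarrow> (hdual \<Rightarrow> hdual) set \<Rightarrow> (hdual \<Rightarrow> hdual)" where
  "longest n S = (THE w. w \<in> S \<and> (\<forall>u \<in> S. len n u \<le> len n w))"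

definition w0 :: "nat \<Rightarrow> hdual \<Rightarrow> hdual" where
  "w0 n = longest n (Wfin n)"

definition w0j :: "nat \<Rightarrow> nat \<Rightarrow> hdual \<Rightarrow> hdual" where
  "w0j n j = longest n (WJ n ({1..n} - {j}))"

definition omega :: "nat \<Rightarrow> nat \<Rightarrow> nat \<Rightarrow> real" where
  "omega n j = (\<lambda>k. if 1 \<le> k \<and> k \<le> n + 1
                     then (if k \<le> j then 1 else 0) - real j / real (n + 1) else 0)"

text \<open>\<open>t_x(v) = v + \<langle>v,c\<rangle> x - ((v|x) + |x|^2/2 \<langle>v,c\<rangle>) \<delta>\<close>, where \<open>\<langle>v,c\<rangle>\<close> is the
  \<open>\<Lambda>_0\<close>-coefficient of \<open>v\<close>.\<close>
definition transl :: "nat \<Rightarrow> (nat \<Rightarrow> real) \<Rightarrow> hdual \<Rightarrow> hdual" where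
  "transl n x v = (let a = fst v; y = fst (snd v); b = snd (snd v) in
     (a, (\<lambda>k. y k + a * x k), b - (dot n y x + dot n x x / 2 * a)))"

definition sigma :: "nat \<Rightarrow> nat \<Rightarrow> hdual \<Rightarrow> hdual" where
  "sigma n j = (if j = 0 then id else transl n (omega n j) \<circ> w0j n j \<circ> w0 n)"

definition SigmaW0 :: "nat \<Rightarrow> (hdual \<Rightarrow> hdual) set" where
  "SigmaW0 n = {sigma n j \<circ> w | j w. j \<le> n \<and> w \<in> Wmin n}"

text \<open>Pairing with \<open>\<rho>^\<or>\<close>: \<open>\<langle>\<alpha>_i, \<rho>^\<or>\<rangle> = 1\<close> for all \<open>i\<close>, normalized by
  \<open>\<langle>\<Lambda>_0, \<rho>^\<or>\<rangle> = 0\<close> (irrelevant for \<open>\<L>\<close>, since \<open>\<Lambda>_0 - g \<Lambda>_0\<close> lies in the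
  root lattice for \<open>g \<in> \<Sigma> W\<close>).\<close>
definition rho_pair :: "nat \<Rightarrow> hdual \<Rightarrow> real" where
  "rho_pair n v = dot n (fst (snd v)) (\<lambda>k. (real n + 2 - 2 * real k) / 2)
                  + real (n + 1) * snd (snd v)"

definition LLam0 :: "nat \<Rightarrow> (hdual \<Rightarrow> hdual) \<Rightarrow> real" where
  "LLam0 n g = rho_pair n (hdiff Lam0 (g Lam0))"

definition Bhat :: "nat \<Rightarrow> nat \<Rightarrow> (hdual \<Rightarrow> hdual) set" where
  "Bhat n N = {v \<in> SigmaW0 n. LLam0 n v = real N}"

end

theory Submission
  imports Defs
begin

abbreviation RR :: "nat \<Rightarrow> nat set" where "RR n \<equiv> {1..n+1}"

definition pfx :: "nat \<Rightarrow> (nat \<Rightarrow> nat) \<Rightarrow> (nat \<Rightarrow> real) \<Rightarrow> nat \<Rightarrow> real" where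
  "pfx n g x = (\<lambda>k. if k \<in> RR n then x (g k) else x k)"

definition pf :: "nat \<Rightarrow> (nat \<Rightarrow> nat) \<Rightarrow> hdual \<Rightarrow> hdual" where
  "pf n g v = (fst v, pfx n g (fst (snd v)), snd (snd v))"

definition Rep :: "nat \<Rightarrow> (nat \<Rightarrow> real) \<Rightarrow> (nat \<Rightarrow> nat) \<Rightarrow> hdual \<Rightarrow> hdual" where
  "Rep n b g = transl n b \<circ> pf n g"

lemma dot_add_left: "dot n (\<lambda>k. x k + y k) z = dot n x z + dot n y z"
  by (simp add: dot_def sum.distrib algebra_simps)
lemma dot_scale_left: "dot n (\<lambda>k. c * x k) z = c * dot n x z"
  by (simp add: dot_def sum_distrib_left algebra_simps)
lemma dot_comm: "dot n x y = dot n y x"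
  by (simp add: dot_def mult.commute)
lemma dot_zero_left[simp]: "dot n (\<lambda>k. 0) z = 0"
  by (simp add: dot_def)

lemma dot_pfx:
  assumes "bij_betw g (RR n) (RR n)"
  shows "dot n (pfx n g x) (pfx n g y) = dot n x y"
proof -
  have "dot n (pfx n g x) (pfx n g y) = (\<Sum>k\<in>RR n. x (g k) * y (g k))"
    unfolding dot_def pfx_def by (rule sum.cong) auto
  also have "\<dots> = (\<Sum>k\<in>RR n. x k * y k)"
    using sum.reindex_bij_betw[OF assms, of "\<lambda>k. x k * y k"] by simp
  finally show ?thesis by (simp add: dot_def)
qed

lemma pfx_sum:
  assumes "bij_betw g (RR n) (RR n)"
  shows "(\<Sum>k\<in>RR n. pfx n g x k) = (\<Sum>k\<in>RR n. x k)"
proof -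
  have "(\<Sum>k\<in>RR n. pfx n g x k) = (\<Sum>k\<in>RR n. x (g k))"
    unfolding pfx_def by (rule sum.cong) auto
  also have "\<dots> = (\<Sum>k\<in>RR n. x k)"
    using sum.reindex_bij_betw[OF assms, of x] by simp
  finally show ?thesis .
qed

lemma transl_transl: "transl n a \<circ> transl n b = transl n (\<lambda>k. a k + b k)"
proof
  fix v :: hdual
  obtain x y c where v: "v = (x, y, c)" by (cases v) auto
  have e1: "dot n (\<lambda>k. y k + x * b k) a = dot n y a + x * dot n b a"
    by (simp add: dot_add_left dot_scale_left)
  have e2: "dot n y (\<lambda>k. a k + b k) = dot n y a + dot n y b"
    using dot_add_left[of n a b y] by (simp add: dot_comm)
  have e3: "dot n (\<lambda>k. a k + b k) (\<lambda>k. a k + b k) = dot n a a + 2 * dot n a b + dot n b b"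
    unfolding dot_def by (simp add: algebra_simps sum.distrib sum_distrib_left)
  have e4: "dot n b a = dot n a b" by (rule dot_comm)
  show "(transl n a \<circ> transl n b) v = transl n (\<lambda>k. a k + b k) v"
    unfolding v transl_def Let_def
    by (simp add: e1 e2 e3 e4 algebra_simps)
qed

lemma pf_transl:
  assumes "bij_betw g (RR n) (RR n)"
  shows "pf n g \<circ> transl n b = transl n (pfx n g b) \<circ> pf n g"
proof
  fix v :: hdual
  obtain x y c where v: "v = (x, y, c)" by (cases v) auto
  have "pfx n g (\<lambda>k. y k + x * b k) = (\<lambda>k. pfx n g y k + x * pfx n g b k)"
    by (auto simp: pfx_def)
  then show "(pf n g \<circ> transl n b) v = (transl n (pfx n g b) \<circ> pf n g) v"
    unfolding v transl_def Let_def pf_def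
    by (simp add: dot_pfx[OF assms])
qed

lemma pf_pf:
  assumes "\<forall>k\<in>RR n. h k \<in> RR n"
  shows "pf n h \<circ> pf n g = pf n (g \<circ> h)"
proof
  fix v :: hdual
  show "(pf n h \<circ> pf n g) v = pf n (g \<circ> h) v"
    using assms by (auto simp: pf_def pfx_def)
qed

lemma Rep_comp:
  assumes "bij_betw g (RR n) (RR n)"
  shows "Rep n a g \<circ> Rep n b h = Rep n (\<lambda>k. a k + pfx n g b k) (h \<circ> g)"
proof -
  have "Rep n a g \<circ> Rep n b h = transl n a \<circ> (pf n g \<circ> transl n b) \<circ> pf n h"
    by (simp add: Rep_def comp_assoc)
  also have "\<dots> = (transl n a \<circ> transl n (pfx n g b)) \<circ> (pf n g \<circ> pf n h)"
    by (simp add: pf_transl[OF assms] comp_assoc)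
  also have "\<dots> = Rep n (\<lambda>k. a k + pfx n g b k) (h \<circ> g)"
    using assms bij_betwE[OF assms] by (simp add: transl_transl pf_pf Rep_def)
  finally show ?thesis .
qed

lemma Rep_cong:
  assumes "\<And>k. a k = b k" "\<And>k. k \<in> RR n \<Longrightarrow> g k = h k"
  shows "Rep n a g = Rep n b h"
proof -
  have "a = b" using assms(1) by auto
  moreover have "pf n g = pf n h"
    by (rule ext) (auto simp: pf_def pfx_def assms(2))
  ultimately show ?thesis by (simp add: Rep_def)
qed

lemma Rep_id: "Rep n (\<lambda>k. 0) id = id"
  by (rule ext) (auto simp: Rep_def transl_def pf_def pfx_def Let_def dot_def)

definition sw :: "nat \<Rightarrow> nat \<Rightarrow> nat \<Rightarrow> nat" where
  "sw a b k = (if k = a then b else if k = b then a else k)"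

definition tau :: "nat \<Rightarrow> nat \<Rightarrow> nat \<Rightarrow> nat" where
  "tau n i = (if i = 0 then sw 1 (n+1) else sw i (Suc i))"

definition thz :: "nat \<Rightarrow> nat \<Rightarrow> nat \<Rightarrow> int" where
  "thz n i a = (if i = 0 then (if a = 1 then 1 else if a = n+1 then -1 else 0) else 0)"

definition theta :: "nat \<Rightarrow> nat \<Rightarrow> nat \<Rightarrow> real" where
  "theta n i = (\<lambda>k. real_of_int (thz n i k))"

lemma dot_eps: "p \<in> RR n \<Longrightarrow> dot n x (eps p) = x p"
proof -
  assume p: "p \<in> RR n"
  have "dot n x (eps p) = (\<Sum>k\<in>RR n. if k = p then x p else 0)"
    unfolding dot_def eps_def by (rule sum.cong) auto
  also have "\<dots> = x p" using p by simp
  finally show ?thesis .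
qed

lemma dot_diff_right: "dot n x (\<lambda>k. y k - z k) = dot n x y - dot n x z"
  by (simp add: dot_def sum_subtractf algebra_simps)

lemma dot_eps2: "p \<in> RR n \<Longrightarrow> q \<in> RR n \<Longrightarrow> dot n x (\<lambda>k. eps p k - eps q k) = x p - x q"
  by (simp add: dot_diff_right dot_eps)

lemma theta0_eq: "n \<ge> 1 \<Longrightarrow> theta n 0 = (\<lambda>k. eps 1 k - eps (n+1) k)"
  by (auto simp: theta_def thz_def eps_def)

lemma theta_pos: "i \<noteq> 0 \<Longrightarrow> theta n i = (\<lambda>k. 0)"
  by (auto simp: theta_def thz_def)

lemma tau_RR: "i \<le> n \<Longrightarrow> k \<in> RR n \<Longrightarrow> tau n i k \<in> RR n"
  by (auto simp: tau_def sw_def)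

lemma tau_invol: "tau n i (tau n i k) = k"
  by (auto simp: tau_def sw_def)

lemma tau_bij: "i \<le> n \<Longrightarrow> bij_betw (tau n i) (RR n) (RR n)"
  apply (rule bij_betw_byWitness[where f'="tau n i"])
  using tau_RR tau_invol by auto

lemma sref_Rep:
  assumes n: "n \<ge> 1" and i: "i \<le> n"
  shows "sref n i = Rep n (theta n i) (tau n i)"
proof
  fix v :: hdual
  obtain a x b where v: "v = (a, x, b)" by (cases v) auto
  show "sref n i v = Rep n (theta n i) (tau n i) v"
  proof (cases "i = 0")
    case True
    have d1: "dot n x (\<lambda>k. eps (n+1) k - eps 1 k) = x (n+1) - x 1"
      by (rule dot_eps2) auto
    have d2: "dot n (pfx n (tau n 0) x) (theta n 0) = x (n+1) - x 1"
      using n by (simp add: theta0_eq dot_eps2 pfx_def tau_def sw_def)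
    have d3: "dot n (theta n 0) (theta n 0) = 2"
    proof -
      have "dot n (theta n 0) (theta n 0) = theta n 0 1 - theta n 0 (n+1)"
        by (subst (2) theta0_eq[OF n]) (rule dot_eps2, auto)
      then show ?thesis using n by (simp add: theta_def thz_def)
    qed
    have L: "sref n 0 (a,x,b) = (a, \<lambda>k. x k - (a + (x (n+1) - x 1)) * (eps (n+1) k - eps 1 k), b - (a + (x (n+1) - x 1)))"
      by (simp add: sref_def hdiff_def hadd_def hscale_def bform_def alpha_def d1[simplified])
    have Rr: "Rep n (theta n 0) (tau n 0) (a,x,b) = (a, \<lambda>k. pfx n (tau n 0) x k + a * theta n 0 k, b - ((x (n+1) - x 1) + 2 / 2 * a))"
      by (simp add: Rep_def transl_def pf_def Let_def d2 d3)
    show ?thesis unfolding v True L Rr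
      using n by (auto simp: pfx_def tau_def sw_def theta_def thz_def eps_def intro!: ext)
  next
    case False
    have d1: "dot n x (\<lambda>k. eps i k - eps (i+1) k) = x i - x (i+1)"
      by (rule dot_eps2) (use False i in auto)
    have L: "sref n i (a,x,b) = (a, \<lambda>k. x k - (x i - x (i+1)) * (eps i k - eps (i+1) k), b)"
      using False by (simp add: sref_def hdiff_def hadd_def hscale_def bform_def alpha_def d1[simplified])
    have Rr: "Rep n (theta n i) (tau n i) (a,x,b) = (a, pfx n (tau n i) x, b)"
      using False by (simp add: Rep_def transl_def pf_def Let_def theta_pos dot_def)
    show ?thesis unfolding v L Rr
      using n False i by (auto simp: pfx_def tau_def sw_def eps_def intro!: ext)
  qed
qed

definition GoodW :: "nat \<Rightarrow> (hdual \<Rightarrow> hdual) \<Rightarrow> bool" where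
  "GoodW n w = (\<exists>b g. w = Rep n b g \<and> bij_betw g (RR n) (RR n) \<and> (\<forall>k. b k \<in> \<int>)
      \<and> (\<forall>k. k \<notin> RR n \<longrightarrow> b k = 0) \<and> (\<Sum>k\<in>RR n. b k) = 0)"

lemma wordfun_Nil: "wordfun n [] = id"
  by (simp add: wordfun_def)
lemma wordfun_Cons: "wordfun n (i # ws) = sref n i \<circ> wordfun n ws"
  by (simp add: wordfun_def)

lemma sum_eps: "p \<in> RR n \<Longrightarrow> (\<Sum>k\<in>RR n. eps p k) = 1"
proof -
  assume p: "p \<in> RR n"
  have "(\<Sum>k\<in>RR n. eps p k) = (\<Sum>k\<in>RR n. if k = p then 1 else 0)"
    unfolding eps_def by (rule sum.cong) auto
  also have "\<dots> = 1" using p by simp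
  finally show ?thesis .
qed

lemma sum_theta: "n \<ge> 1 \<Longrightarrow> (\<Sum>k\<in>RR n. theta n i k) = 0"
proof (cases "i = 0")
  case True
  assume n: "n \<ge> 1"
  have "(\<Sum>k\<in>RR n. theta n i k) = (\<Sum>k\<in>RR n. eps 1 k) - (\<Sum>k\<in>RR n. eps (n+1) k)"
    using True n by (simp add: theta0_eq sum_subtractf)
  also have "\<dots> = 0" using n sum_eps[of 1 n] sum_eps[of "n+1" n] by simp
  finally show ?thesis .
qed (simp add: theta_pos)

lemma GoodW_step:
  assumes n: "n \<ge> 1" and i: "i \<le> n" and G: "GoodW n w"
  shows "GoodW n (sref n i \<circ> w)"
proof -
  obtain b g where w: "w = Rep n b g" and gb: "bij_betw g (RR n) (RR n)"
    and bi: "\<forall>k. b k \<in> \<int>" and bo: "\<forall>k. k \<notin> RR n \<longrightarrow> b k = 0" and bs: "(\<Sum>k\<in>RR n. b k) = 0"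
    using G unfolding GoodW_def by blast
  have eq: "sref n i \<circ> w = Rep n (\<lambda>k. theta n i k + pfx n (tau n i) b k) (g \<circ> tau n i)"
    unfolding w sref_Rep[OF n i] by (rule Rep_comp[OF tau_bij[OF i]])
  have "bij_betw (g \<circ> tau n i) (RR n) (RR n)"
    by (rule bij_betw_trans[OF tau_bij[OF i] gb])
  moreover have "\<forall>k. theta n i k + pfx n (tau n i) b k \<in> \<int>"
    using bi by (auto simp: theta_def pfx_def)
  moreover have "\<forall>k. k \<notin> RR n \<longrightarrow> theta n i k + pfx n (tau n i) b k = 0"
    using bo n by (auto simp: theta_def thz_def pfx_def)
  moreover have "(\<Sum>k\<in>RR n. theta n i k + pfx n (tau n i) b k) = 0"
    using sum_theta[OF n] pfx_sum[OF tau_bij[OF i]] bs by (simp add: sum.distrib)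
  ultimately show ?thesis unfolding GoodW_def eq by blast
qed

lemma GoodW_word:
  assumes n: "n \<ge> 1" and ws: "set ws \<subseteq> {0..n}"
  shows "GoodW n (wordfun n ws)"
  using ws
proof (induction ws)
  case Nil
  have "bij_betw id (RR n) (RR n)" by simp
  then show ?case unfolding GoodW_def wordfun_Nil
    by (intro exI[of _ "\<lambda>k. 0"] exI[of _ id]) (simp add: Rep_id)
next
  case (Cons i ws)
  show ?case unfolding wordfun_Cons by (rule GoodW_step[OF n]) (use Cons in auto)
qed

lemma GoodW_Waff: "n \<ge> 1 \<Longrightarrow> w \<in> Waff n \<Longrightarrow> GoodW n w"
  unfolding Waff_def WJ_def using GoodW_word by blast

lemma sref_invol:
  assumes n: "n \<ge> 1" and i: "i \<le> n"
  shows "sref n i \<circ> sref n i = id"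
proof -
  have "sref n i \<circ> sref n i = Rep n (\<lambda>k. theta n i k + pfx n (tau n i) (theta n i) k) (tau n i \<circ> tau n i)"
    unfolding sref_Rep[OF n i] by (rule Rep_comp[OF tau_bij[OF i]])
  also have "\<dots> = Rep n (\<lambda>k. 0) id"
    by (rule Rep_cong) (use n in \<open>auto simp: theta_def thz_def pfx_def tau_def sw_def\<close>)
  finally show ?thesis by (simp add: Rep_id)
qed

lemma bij_word:
  assumes n: "n \<ge> 1" and ws: "set ws \<subseteq> {0..n}"
  shows "bij (wordfun n ws)"
  using ws
proof (induction ws)
  case Nil show ?case unfolding wordfun_Nil by (rule bij_id)
next
  case (Cons i ws)
  have "bij (sref n i)" using sref_invol[OF n] Cons.prems by (intro o_bij) auto
  then show ?case unfolding wordfun_Cons using Cons by (intro bij_comp) auto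
qed

lemma bij_Waff: "n \<ge> 1 \<Longrightarrow> w \<in> Waff n \<Longrightarrow> bij w"
  unfolding Waff_def WJ_def using bij_word by blast

definition root :: "nat \<Rightarrow> nat \<Rightarrow> int \<Rightarrow> hdual" where
  "root p q k = (0, \<lambda>t. eps p t - eps q t, real_of_int k)"

definition isroot :: "nat \<Rightarrow> hdual \<Rightarrow> bool" where
  "isroot n v = (\<exists>p q k. p \<in> RR n \<and> q \<in> RR n \<and> p \<noteq> q \<and> v = root p q k)"

definition negr :: "nat \<Rightarrow> hdual \<Rightarrow> bool" where
  "negr n v = (\<exists>p q k. p \<in> RR n \<and> q \<in> RR n \<and> p \<noteq> q \<and> v = root p q k \<and> (k < 0 \<or> (k = 0 \<and> q < p)))"

lemma root_inj:
  assumes "p \<noteq> q" "p' \<noteq> q'" "root p q k = root p' q' k'"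
  shows "p = p' \<and> q = q' \<and> k = k'"
proof -
  have f: "\<And>t. eps p t - eps q t = eps p' t - eps q' t"
    using assms(3) unfolding root_def by (metis (no_types, lifting) fst_conv snd_conv)
  have "eps p' p - eps q' p = 1" using f[of p] assms(1) by (simp add: eps_def)
  then have pp: "p' = p" by (auto simp: eps_def split: if_splits)
  have "eps p' q - eps q' q = -1" using f[of q] assms(1) by (simp add: eps_def)
  then have qq: "q' = q" using assms by (auto simp: eps_def split: if_splits)
  have "k = k'" using assms(3) unfolding root_def by simp
  then show ?thesis using pp qq by simp
qed

lemma negr_root:
  assumes "p \<in> RR n" "q \<in> RR n" "p \<noteq> q"
  shows "negr n (root p q k) \<longleftrightarrow> (k < 0 \<or> (k = 0 \<and> q < p))"
proof
  assume "negr n (root p q k)"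
  then obtain p' q' k' where "p' \<noteq> q'" "root p q k = root p' q' k'" "k' < 0 \<or> (k' = 0 \<and> q' < p')"
    unfolding negr_def by blast
  then show "k < 0 \<or> (k = 0 \<and> q < p)" using root_inj[OF assms(3)] by metis
next
  assume "k < 0 \<or> (k = 0 \<and> q < p)"
  then show "negr n (root p q k)" unfolding negr_def using assms by blast
qed

lemma pfx_root_part:
  assumes i: "i \<le> n" and p: "p \<in> RR n" and q: "q \<in> RR n"
  shows "pfx n (tau n i) (\<lambda>t. eps p t - eps q t) = (\<lambda>t. eps (tau n i p) t - eps (tau n i q) t)"
proof
  fix t
  show "pfx n (tau n i) (\<lambda>t. eps p t - eps q t) t = eps (tau n i p) t - eps (tau n i q) t"
  proof (cases "t \<in> RR n")
    case True
    have "\<And>a. (tau n i t = a) = (t = tau n i a)" using tau_invol by metis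
    then show ?thesis using True by (simp add: pfx_def eps_def)
  next
    case False
    then show ?thesis using tau_RR[OF i p] tau_RR[OF i q] p q
      by (auto simp: pfx_def eps_def)
  qed
qed

lemma sref_root:
  assumes n: "n \<ge> 1" and i: "i \<le> n" and p: "p \<in> RR n" and q: "q \<in> RR n"
  shows "sref n i (root p q k) = root (tau n i p) (tau n i q) (k - thz n i (tau n i p) + thz n i (tau n i q))"
proof -
  have d: "dot n (\<lambda>t. eps (tau n i p) t - eps (tau n i q) t) (theta n i) = theta n i (tau n i p) - theta n i (tau n i q)"
    using dot_eps2[OF tau_RR[OF i p] tau_RR[OF i q]] by (simp add: dot_comm)
  show ?thesis
    unfolding sref_Rep[OF n i] Rep_def
    by (simp add: root_def pf_def transl_def Let_def pfx_root_part[OF i p q] d[unfolded theta_def] theta_def)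
qed

lemma tau_inj: "tau n i p = tau n i q \<Longrightarrow> p = q"
  by (metis tau_invol)

lemma isroot_sref:
  assumes n: "n \<ge> 1" and i: "i \<le> n" and r: "isroot n v"
  shows "isroot n (sref n i v)"
proof -
  obtain p q k where pq: "p \<in> RR n" "q \<in> RR n" "p \<noteq> q" "v = root p q k"
    using r unfolding isroot_def by blast
  show ?thesis unfolding isroot_def pq(4) sref_root[OF n i pq(1,2)]
    using tau_RR[OF i pq(1)] tau_RR[OF i pq(2)] tau_inj pq(3) by blast
qed

lemma negcase:
  assumes n: "n \<ge> 1" and i: "i \<le> n" and p: "p \<in> RR n" and q: "q \<in> RR n" and pq: "p \<noteq> q"
    and h1: "\<not> (k < 0 \<or> (k = 0 \<and> q < p))"
    and h2: "(k - thz n i (tau n i p) + thz n i (tau n i q)) < 0 \<or>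
             ((k - thz n i (tau n i p) + thz n i (tau n i q)) = 0 \<and> tau n i q < tau n i p)"
  shows "(i \<noteq> 0 \<longrightarrow> p = i \<and> q = i + 1 \<and> k = 0) \<and> (i = 0 \<longrightarrow> p = n + 1 \<and> q = 1 \<and> k = 1)"
  using assms by (auto simp: tau_def sw_def thz_def split: if_splits)

lemma alpha_root:
  "i \<noteq> 0 \<Longrightarrow> alpha n i = root i (i+1) 0"
  "alpha n 0 = root (n+1) 1 1"
  by (auto simp: alpha_def root_def)

lemma neg_lemma:
  assumes n: "n \<ge> 1" and i: "i \<le> n" and r: "isroot n v" and nv: "\<not> negr n v"
    and ns: "negr n (sref n i v)"
  shows "v = alpha n i"
proof -
  obtain p q k where pq: "p \<in> RR n" "q \<in> RR n" "p \<noteq> q" "v = root p q k"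
    using r unfolding isroot_def by blast
  have h1: "\<not> (k < 0 \<or> (k = 0 \<and> q < p))" using nv negr_root[OF pq(1-3)] pq(4) by simp
  have ne: "tau n i p \<noteq> tau n i q" using tau_inj pq(3) by blast
  have h2: "(k - thz n i (tau n i p) + thz n i (tau n i q)) < 0 \<or>
             ((k - thz n i (tau n i p) + thz n i (tau n i q)) = 0 \<and> tau n i q < tau n i p)"
    using ns unfolding pq(4) sref_root[OF n i pq(1,2)]
    using negr_root[OF tau_RR[OF i pq(1)] tau_RR[OF i pq(2)] ne] by simp
  show ?thesis using negcase[OF n i pq(1-3) h1 h2] pq(4) alpha_root by (cases "i = 0") auto
qed

lemma isroot_word:
  assumes n: "n \<ge> 1" and ws: "set ws \<subseteq> {0..n}" and r: "isroot n v"
  shows "isroot n (wordfun n ws v)"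
  using ws
proof (induction ws)
  case Nil then show ?case using r by (simp add: wordfun_Nil)
next
  case (Cons i ws) then show ?case using isroot_sref[OF n] by (simp add: wordfun_Cons)
qed

definition Nset :: "nat \<Rightarrow> (hdual \<Rightarrow> hdual) \<Rightarrow> (nat \<times> nat) set" where
  "Nset n w = {(p, q). p \<in> RR n \<and> q \<in> RR n \<and> p < q \<and> negr n (w (root p q 0))}"

lemma Nset_finite: "finite (Nset n w)"
  by (rule finite_subset[of _ "RR n \<times> RR n"]) (auto simp: Nset_def)

lemma Nset_step:
  assumes n: "n \<ge> 1" and i: "i \<le> n" and rw: "\<And>v. isroot n v \<Longrightarrow> isroot n (w v)" and iw: "inj w"
  shows "card (Nset n (sref n i \<circ> w)) \<le> card (Nset n w) + 1"
proof -
  define A where "A = {(p, q). p \<in> RR n \<and> q \<in> RR n \<and> p < q \<and> w (root p q 0) = alpha n i}"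
  have sub: "Nset n (sref n i \<circ> w) \<subseteq> Nset n w \<union> A"
  proof
    fix x assume x: "x \<in> Nset n (sref n i \<circ> w)"
    obtain p q where xpq: "x = (p, q)" by (cases x)
    have pq: "p \<in> RR n" "q \<in> RR n" "p < q" "negr n (sref n i (w (root p q 0)))"
      using x unfolding xpq Nset_def by auto
    have "p \<noteq> q" using pq by simp
    then have "isroot n (root p q 0)" unfolding isroot_def using pq by blast
    then have ir: "isroot n (w (root p q 0))" by (rule rw)
    show "x \<in> Nset n w \<union> A"
    proof (cases "negr n (w (root p q 0))")
      case True then show ?thesis using pq unfolding xpq Nset_def by auto
    next
      case False
      then have "w (root p q 0) = alpha n i" using neg_lemma[OF n i ir False pq(4)] by simp
      then show ?thesis using pq unfolding xpq A_def by auto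
    qed
  qed
  have fA: "finite A" by (rule finite_subset[of _ "RR n \<times> RR n"]) (auto simp: A_def)
  have cA: "card A \<le> 1"
  proof -
    have "\<forall>a1\<in>A. \<forall>a2\<in>A. a1 = a2"
    proof (intro ballI)
      fix a1 a2 assume a1: "a1 \<in> A" and a2: "a2 \<in> A"
      obtain p q p' q' where e: "a1 = (p, q)" "a2 = (p', q')" by (cases a1, cases a2)
      have "w (root p q 0) = w (root p' q' 0)" "p < q" "p' < q'" using a1 a2 unfolding e A_def by auto
      then have "root p q 0 = root p' q' 0" "p \<noteq> q" "p' \<noteq> q'" using iw by (auto dest: injD)
      then show "a1 = a2" using root_inj e by blast
    qed
    then show ?thesis using card_le_Suc0_iff_eq[OF fA] by simp
  qed
  have "card (Nset n (sref n i \<circ> w)) \<le> card (Nset n w \<union> A)"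
    by (rule card_mono[OF _ sub]) (use Nset_finite fA in simp)
  also have "\<dots> \<le> card (Nset n w) + card A" by (rule card_Un_le)
  finally show ?thesis using cA by simp
qed

lemma Nset_word:
  assumes n: "n \<ge> 1" and ws: "set ws \<subseteq> {0..n}"
  shows "card (Nset n (wordfun n ws)) \<le> length ws"
  using ws
proof (induction ws)
  case Nil
  have "Nset n (wordfun n []) = {}"
    by (auto simp: Nset_def wordfun_Nil negr_root)
  then show ?case by simp
next
  case (Cons i ws)
  have s: "set ws \<subseteq> {0..n}" "i \<le> n" using Cons.prems by auto
  have "card (Nset n (sref n i \<circ> wordfun n ws)) \<le> card (Nset n (wordfun n ws)) + 1"
    by (rule Nset_step[OF n s(2)]) (use isroot_word[OF n s(1)] bij_word[OF n s(1)] in \<open>auto simp: bij_def\<close>)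
  then show ?case using Cons.IH[OF s(1)] by (simp only: wordfun_Cons list.size)
qed

lemma len_word:
  assumes "set ws \<subseteq> {0..n}"
  shows "len n (wordfun n ws) \<le> length ws"
  unfolding len_def by (rule Least_le) (use assms in blast)

lemma len_ex:
  assumes "w \<in> Waff n"
  shows "\<exists>ws. set ws \<subseteq> {0..n} \<and> length ws = len n w \<and> wordfun n ws = w"
proof -
  obtain ws where "set ws \<subseteq> {0..n}" "wordfun n ws = w"
    using assms unfolding Waff_def WJ_def by blast
  then have "\<exists>k ws. set ws \<subseteq> {0..n} \<and> length ws = k \<and> wordfun n ws = w" by blast
  then show ?thesis unfolding len_def by (rule LeastI_ex)
qed

lemma Nset_len:
  assumes n: "n \<ge> 1" and w: "w \<in> Waff n"
  shows "card (Nset n w) \<le> len n w"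
  using len_ex[OF w] Nset_word[OF n] by metis

definition bp :: "nat \<Rightarrow> nat \<Rightarrow> (nat \<Rightarrow> nat) \<Rightarrow> bool" where
  "bp n j g = ((\<forall>k\<in>RR n. g k \<in> RR n) \<and> inj_on g (RR n) \<and> (\<forall>k\<in>RR n. (g k \<le> j) = (k \<le> j)))"

definition Inv :: "nat \<Rightarrow> (nat \<Rightarrow> nat) \<Rightarrow> (nat \<times> nat) set" where
  "Inv n g = {(p, q). p \<in> RR n \<and> q \<in> RR n \<and> p < q \<and> g q < g p}"

definition rv :: "nat \<Rightarrow> nat \<Rightarrow> nat \<Rightarrow> nat" where
  "rv n j k = (if k \<le> j then j + 1 - k else j + n + 2 - k)"

lemma Inv_finite: "finite (Inv n g)"
  by (rule finite_subset[of _ "RR n \<times> RR n"]) (auto simp: Inv_def)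

lemma transl_zero: "transl n (\<lambda>k. 0) = id"
  by (rule ext) (auto simp: transl_def Let_def dot_def)

lemma pf_id: "pf n id = id"
  by (rule ext) (auto simp: pf_def pfx_def)

lemma pf_cong: "(\<And>k. k \<in> RR n \<Longrightarrow> g k = h k) \<Longrightarrow> pf n g = pf n h"
  by (rule ext) (auto simp: pf_def pfx_def)

lemma sref_pf: "n \<ge> 1 \<Longrightarrow> 1 \<le> i \<Longrightarrow> i \<le> n \<Longrightarrow> sref n i = pf n (tau n i)"
  using sref_Rep[of n i] by (simp add: theta_pos Rep_def transl_zero)

lemma bp_tau:
  assumes g: "bp n j g" and i: "1 \<le> i" "i \<le> n" "i \<noteq> j"
  shows "bp n j (g \<circ> tau n i)"
proof -
  have tR: "\<forall>k\<in>RR n. tau n i k \<in> RR n" using tau_RR i by auto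
  have "inj_on (tau n i) (RR n)" by (metis inj_onI tau_invol)
  moreover have "tau n i ` RR n \<subseteq> RR n" using tR by auto
  ultimately have "inj_on (g \<circ> tau n i) (RR n)"
    using g unfolding bp_def by (meson comp_inj_on inj_on_subset)
  moreover have "\<forall>k\<in>RR n. (g (tau n i k) \<le> j) = (k \<le> j)"
  proof
    fix k assume k: "k \<in> RR n"
    have "(g (tau n i k) \<le> j) = (tau n i k \<le> j)" using g tR k unfolding bp_def by auto
    also have "\<dots> = (k \<le> j)" using i by (auto simp: tau_def sw_def)
    finally show "(g (tau n i k) \<le> j) = (k \<le> j)" .
  qed
  ultimately show ?thesis using g tR unfolding bp_def by auto
qed

lemma WJ_pf:
  assumes n: "n \<ge> 1" and ws: "set ws \<subseteq> {1..n} - {j}"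
  shows "\<exists>g. bp n j g \<and> wordfun n ws = pf n g"
  using ws
proof (induction ws)
  case Nil
  have "bp n j id" by (auto simp: bp_def)
  moreover have "wordfun n [] = pf n id" by (simp only: wordfun_Nil pf_id)
  ultimately show ?case by blast
next
  case (Cons i ws)
  then obtain g where g: "bp n j g" "wordfun n ws = pf n g" by auto
  have i: "1 \<le> i" "i \<le> n" "i \<noteq> j" using Cons.prems by auto
  have "wordfun n (i # ws) = pf n (g \<circ> tau n i)"
    unfolding wordfun_Cons g(2) sref_pf[OF n i(1,2)]
    by (rule pf_pf) (use tau_RR i in auto)
  then show ?case using bp_tau[OF g(1) i] by blast
qed

lemma rank_lemma:
  assumes m: "\<forall>k\<in>RR n. g k \<in> RR n" and inj: "inj_on g (RR n)" and k: "k \<in> RR n"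
  shows "g k = Suc (card {q \<in> RR n. g q < g k})"
proof -
  have im: "g ` RR n = RR n" using m inj by (intro endo_inj_surj) auto
  have ex: "\<forall>x\<in>RR n. \<exists>q\<in>RR n. x = g q" using im by blast
  have "{m \<in> RR n. m < g k} = g ` {q \<in> RR n. g q < g k}"
  proof
    show "{m \<in> RR n. m < g k} \<subseteq> g ` {q \<in> RR n. g q < g k}"
    proof
      fix x assume "x \<in> {m \<in> RR n. m < g k}"
      then obtain q where "q \<in> RR n" "x = g q" "x < g k" using ex by blast
      then show "x \<in> g ` {q \<in> RR n. g q < g k}" by blast
    qed
  qed (use m in auto)
  moreover have "inj_on g {q \<in> RR n. g q < g k}" by (rule inj_on_subset[OF inj]) auto
  ultimately have "card {m \<in> RR n. m < g k} = card {q \<in> RR n. g q < g k}"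
    by (simp add: card_image)
  moreover have "{m \<in> RR n. m < g k} = {1..<g k}" using m k by fastforce
  moreover have "g k \<ge> 1" using m k by auto
  ultimately show ?thesis by simp
qed

lemma order_equiv:
  assumes "\<forall>k\<in>RR n. g k \<in> RR n" "inj_on g (RR n)" "\<forall>k\<in>RR n. h k \<in> RR n" "inj_on h (RR n)"
    and eq: "\<forall>p\<in>RR n. \<forall>q\<in>RR n. (g p < g q) = (h p < h q)" and k: "k \<in> RR n"
  shows "g k = h k"
proof -
  have "{q \<in> RR n. g q < g k} = {q \<in> RR n. h q < h k}" using eq k by auto
  then show ?thesis using rank_lemma[OF assms(1,2) k] rank_lemma[OF assms(3,4) k] by simp
qed

lemma Inv_equiv:
  assumes "inj_on g (RR n)" "inj_on h (RR n)" "Inv n g = Inv n h" "p \<in> RR n" "q \<in> RR n"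
  shows "(g p < g q) = (h p < h q)"
proof -
  consider "p < q" | "p = q" | "q < p" by linarith
  then show ?thesis
  proof cases
    case 1
    have "((p, q) \<in> Inv n g) = ((p, q) \<in> Inv n h)" using assms(3) by simp
    then have "(g q < g p) = (h q < h p)" using 1 assms(4,5) by (simp add: Inv_def)
    moreover have "g p \<noteq> g q" "h p \<noteq> h q" using 1 assms(1,2,4,5) by (auto dest: inj_onD)
    ultimately show ?thesis by linarith
  next
    case 3
    have "((q, p) \<in> Inv n g) = ((q, p) \<in> Inv n h)" using assms(3) by simp
    then show ?thesis using 3 assms(4,5) by (simp add: Inv_def)
  qed simp
qed

lemma sw_order:
  assumes "p < q" "(p, q) \<noteq> (i, Suc i)"
  shows "sw i (Suc i) p < sw i (Suc i) q"
  using assms unfolding sw_def by auto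

lemma inv_step:
  assumes m: "\<forall>k\<in>RR n. g k \<in> RR n" and i: "1 \<le> i" "i \<le> n" and d: "g (Suc i) < g i"
  shows "card (Inv n g) = Suc (card (Inv n (g \<circ> tau n i)))"
proof -
  define sp where "sp = (\<lambda>(p::nat, q::nat). (tau n i p, tau n i q))"
  have t: "tau n i = sw i (Suc i)" using i by (simp add: tau_def)
  have eq: "sp ` Inv n (g \<circ> tau n i) = Inv n g - {(i, Suc i)}"
  proof
    show "sp ` Inv n (g \<circ> tau n i) \<subseteq> Inv n g - {(i, Suc i)}"
    proof
      fix y assume "y \<in> sp ` Inv n (g \<circ> tau n i)"
      then obtain p q where pq: "(p, q) \<in> Inv n (g \<circ> tau n i)" and y: "y = (tau n i p, tau n i q)"
        unfolding sp_def by auto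
      have h: "p \<in> RR n" "q \<in> RR n" "p < q" "g (tau n i q) < g (tau n i p)"
        using pq by (auto simp: Inv_def)
      have ne: "(p, q) \<noteq> (i, Suc i)"
      proof
        assume "(p, q) = (i, Suc i)"
        then have "g (tau n i q) = g i" "g (tau n i p) = g (Suc i)" by (auto simp: t sw_def)
        then show False using h(4) d by simp
      qed
      have o: "tau n i p < tau n i q" unfolding t by (rule sw_order[OF h(3) ne])
      have ne2: "(tau n i p, tau n i q) \<noteq> (i, Suc i)"
      proof
        assume "(tau n i p, tau n i q) = (i, Suc i)"
        then have "p = Suc i" "q = i" by (metis Pair_inject tau_invol t sw_def)+
        then show False using h(3) by simp
      qed
      show "y \<in> Inv n g - {(i, Suc i)}"
        using o ne2 h tau_RR[OF i(2) h(1)] tau_RR[OF i(2) h(2)] unfolding y Inv_def by auto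
    qed
  next
    show "Inv n g - {(i, Suc i)} \<subseteq> sp ` Inv n (g \<circ> tau n i)"
    proof
      fix x assume x: "x \<in> Inv n g - {(i, Suc i)}"
      obtain p q where xpq: "x = (p, q)" by (cases x)
      have h: "p \<in> RR n" "q \<in> RR n" "p < q" "g q < g p" "(p, q) \<noteq> (i, Suc i)"
        using x unfolding xpq by (auto simp: Inv_def)
      have o: "tau n i p < tau n i q" unfolding t by (rule sw_order[OF h(3) h(5)])
      have "(tau n i p, tau n i q) \<in> Inv n (g \<circ> tau n i)"
        using o h tau_RR[OF i(2) h(1)] tau_RR[OF i(2) h(2)] tau_invol unfolding Inv_def by auto
      moreover have "x = sp (tau n i p, tau n i q)" by (simp add: sp_def xpq tau_invol)
      ultimately show "x \<in> sp ` Inv n (g \<circ> tau n i)" by blast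
    qed
  qed
  have "inj_on sp (Inv n (g \<circ> tau n i))"
    by (rule inj_onI) (auto simp: sp_def intro: tau_inj)
  then have "card (Inv n g - {(i, Suc i)}) = card (Inv n (g \<circ> tau n i))"
    using eq card_image by metis
  moreover have "(i, Suc i) \<in> Inv n g" using i d by (auto simp: Inv_def)
  ultimately show ?thesis using Inv_finite
    by (metis card_Suc_Diff1)
qed

lemma incr_chain:
  fixes g :: "nat \<Rightarrow> nat"
  assumes a: "\<forall>i\<in>{1..n}. g i < g (Suc i)" and p: "p \<in> RR n"
  shows "p + Suc d \<le> n + 1 \<Longrightarrow> g p < g (p + Suc d)"
proof (induction d)
  case 0
  have "p \<in> {1..n}" using p 0 by simp
  then have "g p < g (Suc p)" using a by blast
  then show ?case by simp
next
  case (Suc d)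
  have h1: "p + Suc d \<le> n + 1" using Suc.prems by simp
  have h: "g p < g (p + Suc d)" by (rule Suc.IH[OF h1])
  have "p + Suc d \<in> {1..n}" using Suc.prems p by simp
  then have "g (p + Suc d) < g (Suc (p + Suc d))" using a by blast
  then have "g p < g (Suc (p + Suc d))" using h by (rule less_trans[rotated])
  then show ?case by simp
qed

lemma bubble:
  assumes n: "n \<ge> 1"
  shows "bp n j g \<Longrightarrow> m = card (Inv n g) \<Longrightarrow>
    \<exists>ws. set ws \<subseteq> {1..n} - {j} \<and> length ws = card (Inv n g) \<and> wordfun n ws = pf n g"
proof (induction m arbitrary: g)
  case 0
  have e1: "Inv n g = {}" using 0 Inv_finite[of n g] by simp
  have e2: "Inv n id = {}" by (auto simp: Inv_def)
  have e: "Inv n g = Inv n id" using e1 e2 by simp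
  have gm: "\<forall>k\<in>RR n. g k \<in> RR n" "inj_on g (RR n)" using 0 by (auto simp: bp_def)
  have im: "\<forall>k\<in>RR n. id k \<in> RR n" "inj_on id (RR n)" by auto
  have oe: "\<forall>p\<in>RR n. \<forall>q\<in>RR n. (g p < g q) = (id p < id q)"
    using Inv_equiv[OF gm(2) im(2) e] by blast
  have "\<forall>k\<in>RR n. g k = id k"
    using order_equiv[OF gm im oe] by blast
  then have "pf n g = pf n id" by (intro pf_cong) auto
  then have "wordfun n [] = pf n g" by (simp only: wordfun_Nil pf_id)
  moreover have "set [] \<subseteq> {1..n} - {j}" "length [] = card (Inv n g)" using e1 by auto
  ultimately show ?case by blast
next
  case (Suc m)
  have gm: "\<forall>k\<in>RR n. g k \<in> RR n" "inj_on g (RR n)" "\<forall>k\<in>RR n. (g k \<le> j) = (k \<le> j)"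
    using Suc.prems by (auto simp: bp_def)
  have "\<exists>i\<in>{1..n}. g (Suc i) < g i"
  proof (rule ccontr)
    assume na: "\<not> (\<exists>i\<in>{1..n}. g (Suc i) < g i)"
    have a: "\<forall>i\<in>{1..n}. g i < g (Suc i)"
    proof
      fix i assume ii: "i \<in> {1..n}"
      have "g i \<noteq> g (Suc i)"
      proof
        assume "g i = g (Suc i)"
        then have "i = Suc i" using inj_onD[OF gm(2)] ii by simp
        then show False by simp
      qed
      moreover have "\<not> g (Suc i) < g i" using na ii by blast
      ultimately show "g i < g (Suc i)" by simp
    qed
    have "Inv n g = {}"
    proof (rule equals0I)
      fix x assume x: "x \<in> Inv n g"
      obtain p q where xpq: "x = (p, q)" by (cases x)
      have pq: "p \<in> RR n" "q \<in> RR n" "p < q" "g q < g p" using x unfolding xpq Inv_def by auto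
      obtain d where dq: "q = Suc (p + d)" using less_imp_Suc_add[OF pq(3)] by blast
      have "p + Suc d \<le> n + 1" using pq(2) dq by simp
      then have "g p < g (p + Suc d)" by (rule incr_chain[OF a pq(1)])
      then show False using pq(4) dq by simp
    qed
    then show False using Suc.prems(2) by simp
  qed
  then obtain i where i: "1 \<le> i" "i \<le> n" "g (Suc i) < g i" by auto
  have ij: "i \<noteq> j"
  proof
    assume "i = j"
    then have "g i \<le> j" "\<not> g (Suc i) \<le> j" using gm(3) i by auto
    then show False using i(3) by simp
  qed
  have bp': "bp n j (g \<circ> tau n i)" by (rule bp_tau[OF Suc.prems(1) i(1,2) ij])
  have c: "card (Inv n g) = Suc (card (Inv n (g \<circ> tau n i)))" by (rule inv_step[OF gm(1) i])
  have mm: "m = card (Inv n (g \<circ> tau n i))" using Suc.prems(2) c by simp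
  obtain ws where ws: "set ws \<subseteq> {1..n} - {j}" "length ws = card (Inv n (g \<circ> tau n i))"
    "wordfun n ws = pf n (g \<circ> tau n i)"
    using Suc.IH[OF bp' mm] by blast
  have "wordfun n (i # ws) = pf n (g \<circ> tau n i \<circ> tau n i)"
    unfolding wordfun_Cons ws(3) sref_pf[OF n i(1,2)]
    by (rule pf_pf) (use tau_RR i in auto)
  also have "\<dots> = pf n g" by (rule pf_cong) (simp add: tau_invol)
  finally have "wordfun n (i # ws) = pf n g" .
  moreover have "set (i # ws) \<subseteq> {1..n} - {j}" using ws(1) i ij by auto
  moreover have "length (i # ws) = card (Inv n g)" using ws(2) c by simp
  ultimately show ?case by blast
qed

lemma rv_R: "j \<le> n \<Longrightarrow> k \<in> RR n \<Longrightarrow> rv n j k \<in> RR n"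
  by (auto simp: rv_def)

lemma rv_invol: "j \<le> n \<Longrightarrow> k \<in> RR n \<Longrightarrow> rv n j (rv n j k) = k"
  by (auto simp: rv_def)

lemma bp_rv: "j \<le> n \<Longrightarrow> bp n j (rv n j)"
  unfolding bp_def
proof (intro conjI ballI)
  assume j: "j \<le> n"
  show "\<And>k. k \<in> RR n \<Longrightarrow> rv n j k \<in> RR n" using rv_R[OF j] by blast
  show "inj_on (rv n j) (RR n)"
  proof (rule inj_onI)
    fix x y assume xy: "x \<in> RR n" "y \<in> RR n" "rv n j x = rv n j y"
    have "x = rv n j (rv n j x)" using rv_invol[OF j xy(1)] by simp
    also have "\<dots> = rv n j (rv n j y)" using xy(3) by simp
    also have "\<dots> = y" using rv_invol[OF j xy(2)] by simp
    finally show "x = y" .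
  qed
  show "\<And>k. k \<in> RR n \<Longrightarrow> (rv n j k \<le> j) = (k \<le> j)" using j by (auto simp: rv_def)
qed

lemma Inv_sub:
  assumes j: "j \<le> n" and g: "bp n j g"
  shows "Inv n g \<subseteq> Inv n (rv n j)"
proof
  fix x assume x: "x \<in> Inv n g"
  obtain p q where xpq: "x = (p, q)" by (cases x)
  have pq: "p \<in> RR n" "q \<in> RR n" "p < q" "g q < g p" using x unfolding xpq Inv_def by auto
  have b: "\<forall>k\<in>RR n. (g k \<le> j) = (k \<le> j)" using g by (simp add: bp_def)
  have "\<not> (p \<le> j \<and> j < q)"
  proof
    assume "p \<le> j \<and> j < q"
    then have "g p \<le> j" "\<not> g q \<le> j" using b pq(1,2) by auto
    then show False using pq(4) by simp
  qed
  then have "rv n j q < rv n j p" using pq j by (auto simp: rv_def)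
  then show "x \<in> Inv n (rv n j)" using pq unfolding xpq Inv_def by auto
qed

lemma pf_root_gen:
  assumes g: "\<forall>k\<in>RR n. g k \<in> RR n \<and> g (g k) = k" and p: "p \<in> RR n" and q: "q \<in> RR n"
  shows "pf n g (root p q k) = root (g p) (g q) k"
proof -
  have "pfx n g (\<lambda>t. eps p t - eps q t) = (\<lambda>t. eps (g p) t - eps (g q) t)"
  proof
    fix t
    show "pfx n g (\<lambda>t. eps p t - eps q t) t = eps (g p) t - eps (g q) t"
    proof (cases "t \<in> RR n")
      case True
      have "\<And>a. a \<in> RR n \<Longrightarrow> (g t = a) = (t = g a)"
      proof -
        fix a assume a: "a \<in> RR n"
        have e1: "g (g t) = t" using g True by blast
        have e2: "g (g a) = a" using g a by blast
        show "(g t = a) = (t = g a)"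
        proof
          assume "g t = a" then show "t = g a" using e1 by simp
        next
          assume "t = g a" then show "g t = a" using e2 by simp
        qed
      qed
      then show ?thesis using True p q by (simp add: pfx_def eps_def)
    next
      case False
      have "g p \<in> RR n" "g q \<in> RR n" using g p q by blast+
      then show ?thesis using False p q by (auto simp: pfx_def eps_def)
    qed
  qed
  then show ?thesis by (simp add: pf_def root_def)
qed

lemma Nset_rv:
  assumes j: "j \<le> n"
  shows "Nset n (pf n (rv n j)) = Inv n (rv n j)"
proof -
  have g: "\<forall>k\<in>RR n. rv n j k \<in> RR n \<and> rv n j (rv n j k) = k" using rv_R[OF j] rv_invol[OF j] by blast
  have "\<And>p q. p \<in> RR n \<Longrightarrow> q \<in> RR n \<Longrightarrow> p < q \<Longrightarrow>
      negr n (pf n (rv n j) (root p q 0)) = (rv n j q < rv n j p)"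
  proof -
    fix p q assume pq: "p \<in> RR n" "q \<in> RR n" "p < q"
    have ne: "rv n j p \<noteq> rv n j q"
    proof
      assume "rv n j p = rv n j q"
      then have "rv n j (rv n j p) = rv n j (rv n j q)" by simp
      then show False using rv_invol[OF j pq(1)] rv_invol[OF j pq(2)] pq(3) by simp
    qed
    show "negr n (pf n (rv n j) (root p q 0)) = (rv n j q < rv n j p)"
      unfolding pf_root_gen[OF g pq(1,2)] negr_root[OF rv_R[OF j pq(1)] rv_R[OF j pq(2)] ne] by simp
  qed
  then show ?thesis unfolding Nset_def Inv_def by auto
qed

lemma longest_eq:
  assumes n: "n \<ge> 1" and j: "j \<le> n"
  shows "longest n (WJ n ({1..n} - {j})) = pf n (rv n j)"
proof -
  define S where "S = WJ n ({1..n} - {j})"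
  define c where "c = pf n (rv n j)"
  have bpr: "bp n j (rv n j)" by (rule bp_rv[OF j])
  obtain wsc where wsc: "set wsc \<subseteq> {1..n} - {j}" "length wsc = card (Inv n (rv n j))"
      "wordfun n wsc = c"
    using bubble[OF n bpr refl] unfolding c_def by blast
  have cS: "c \<in> S" unfolding S_def WJ_def using wsc by blast
  have cW: "c \<in> Waff n" unfolding Waff_def WJ_def using wsc by fastforce
  have lc: "card (Inv n (rv n j)) \<le> len n c"
    using Nset_len[OF n cW] Nset_rv[OF j] unfolding c_def by simp
  have ub: "\<exists>g. bp n j g \<and> u = pf n g \<and> len n u \<le> card (Inv n g)" if u: "u \<in> S" for u
  proof -
    obtain ws where ws: "set ws \<subseteq> {1..n} - {j}" "u = wordfun n ws" using u unfolding S_def WJ_def by blast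
    obtain g where g: "bp n j g" "wordfun n ws = pf n g" using WJ_pf[OF n ws(1)] by blast
    obtain ws' where ws': "set ws' \<subseteq> {1..n} - {j}" "length ws' = card (Inv n g)" "wordfun n ws' = pf n g"
      using bubble[OF n g(1) refl] by blast
    have "set ws' \<subseteq> {0..n}" using ws'(1) by auto
    then have "len n u \<le> card (Inv n g)" using len_word[of ws' n] ws' ws(2) g(2) by simp
    then show ?thesis using g ws(2) by blast
  qed
  have P: "c \<in> S \<and> (\<forall>u\<in>S. len n u \<le> len n c)"
  proof (intro conjI ballI cS)
    fix u assume u: "u \<in> S"
    obtain g where g: "bp n j g" "u = pf n g" "len n u \<le> card (Inv n g)" using ub[OF u] by blast
    have "card (Inv n g) \<le> card (Inv n (rv n j))"
      by (rule card_mono[OF Inv_finite Inv_sub[OF j g(1)]])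
    then show "len n u \<le> len n c" using g(3) lc by simp
  qed
  have U: "w = c" if w: "w \<in> S \<and> (\<forall>u\<in>S. len n u \<le> len n w)" for w
  proof -
    obtain g where g: "bp n j g" "w = pf n g" "len n w \<le> card (Inv n g)" using ub w by blast
    have "len n c \<le> len n w" using w cS by blast
    have sub: "Inv n g \<subseteq> Inv n (rv n j)" by (rule Inv_sub[OF j g(1)])
    have "card (Inv n g) \<le> card (Inv n (rv n j))" by (rule card_mono[OF Inv_finite sub])
    then have "card (Inv n g) = card (Inv n (rv n j))"
      using \<open>len n c \<le> len n w\<close> g(3) lc by simp
    then have e: "Inv n g = Inv n (rv n j)" using card_subset_eq[OF Inv_finite sub] by simp
    have gm: "\<forall>k\<in>RR n. g k \<in> RR n" "inj_on g (RR n)" using g(1) by (auto simp: bp_def)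
    have rm: "\<forall>k\<in>RR n. rv n j k \<in> RR n" "inj_on (rv n j) (RR n)" using bpr by (auto simp: bp_def)
    have oe: "\<forall>p\<in>RR n. \<forall>q\<in>RR n. (g p < g q) = (rv n j p < rv n j q)"
      using Inv_equiv[OF gm(2) rm(2) e] by blast
    have "\<forall>k\<in>RR n. g k = rv n j k" using order_equiv[OF gm rm oe] by blast
    then have "pf n g = pf n (rv n j)" by (intro pf_cong) auto
    then show ?thesis using g(2) unfolding c_def by simp
  qed
  have "longest n S = c" unfolding longest_def
    by (rule the_equality) (use P U in blast)+
  then show ?thesis unfolding S_def c_def .
qed

definition cyc :: "nat \<Rightarrow> nat \<Rightarrow> nat \<Rightarrow> nat" where
  "cyc n j k = rv n 0 (rv n j k)"

lemma cyc_eq: "j \<le> n + 1 \<Longrightarrow> k \<in> RR n \<Longrightarrow> cyc n j k = (if k \<le> j then n + 1 - j + k else k - j)"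
  by (auto simp: cyc_def rv_def)

lemma rv_bij: "j \<le> n \<Longrightarrow> bij_betw (rv n j) (RR n) (RR n)"
  apply (rule bij_betw_byWitness[where f'="rv n j"])
  using rv_invol[of j n] rv_R[of j n] by blast+

lemma cyc_comp: "cyc n j = rv n 0 \<circ> rv n j"
  by (rule ext) (simp add: cyc_def)

lemma cyc_bij: "j \<le> n \<Longrightarrow> bij_betw (cyc n j) (RR n) (RR n)"
proof -
  assume j: "j \<le> n"
  have "bij_betw (rv n 0 \<circ> rv n j) (RR n) (RR n)"
    by (rule bij_betw_trans[OF rv_bij[OF j] rv_bij]) simp
  then show ?thesis by (simp only: cyc_comp)
qed

lemma sigma_Rep:
  assumes n: "n \<ge> 1" and j: "j \<le> n"
  shows "sigma n j = Rep n (omega n j) (cyc n j)"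
proof (cases "j = 0")
  case True
  have "Rep n (omega n j) (cyc n j) = Rep n (\<lambda>k. 0) id"
    by (rule Rep_cong) (auto simp: True omega_def cyc_eq)
  then show ?thesis using True by (simp add: sigma_def Rep_id)
next
  case False
  have w0: "w0 n = pf n (rv n 0)"
    unfolding w0_def Wfin_def using longest_eq[OF n, of 0] by simp
  have w0j: "w0j n j = pf n (rv n j)"
    unfolding w0j_def using longest_eq[OF n j] by simp
  have "pf n (rv n j) \<circ> pf n (rv n 0) = pf n (rv n 0 \<circ> rv n j)"
    by (rule pf_pf) (use rv_R[OF j] in auto)
  then have "w0j n j \<circ> w0 n = pf n (cyc n j)"
    by (simp only: w0 w0j cyc_comp)
  then show ?thesis using False by (simp add: sigma_def Rep_def comp_assoc)
qed

lemma omega_R: "k \<in> RR n \<Longrightarrow> omega n j k = (if k \<le> j then 1 else 0) - real j / (real n + 1)"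
  by (simp add: omega_def)

lemma omega_out: "k \<notin> RR n \<Longrightarrow> omega n j k = 0"
  unfolding omega_def by auto

lemma frac_helper: "(x::real) \<noteq> 0 \<Longrightarrow> a - 1 / x + (b - c / x) = a + b - (c + 1) / x"
  by (simp add: field_simps)

lemma omega_step:
  assumes n: "n \<ge> 1" and j: "j \<le> n"
  shows "omega n 1 k + pfx n (cyc n 1) (omega n j) k = omega n (Suc j) k"
proof (cases "k \<in> RR n")
  case True
  have c1: "cyc n 1 k = (if k \<le> 1 then n + 1 else k - 1)" using cyc_eq[of 1 n k] True by auto
  have r: "cyc n 1 k \<in> RR n" using c1 True by auto
  have x: "real n + 1 \<noteq> 0" by simp
  have e1: "omega n 1 k = (if k \<le> 1 then 1 else 0) - 1 / (real n + 1)" using omega_R[OF True] by simp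
  have e2: "pfx n (cyc n 1) (omega n j) k = (if cyc n 1 k \<le> j then 1 else 0) - real j / (real n + 1)"
    using True omega_R[OF r] by (simp add: pfx_def)
  have e3: "omega n (Suc j) k = (if k \<le> Suc j then 1 else 0) - (real j + 1) / (real n + 1)"
    using omega_R[OF True, of "Suc j"] by simp
  have b: "(if k \<le> 1 then 1 else 0) + (if cyc n 1 k \<le> j then 1 else 0) = (if k \<le> Suc j then (1::real) else 0)"
    using c1 j True by auto
  show ?thesis unfolding e1 e2 e3 frac_helper[OF x] b ..
next
  case False
  have "pfx n (cyc n 1) (omega n j) k = omega n j k" using False unfolding pfx_def by auto
  then show ?thesis using omega_out[OF False] by simp
qed

lemma omega_top: "omega n (Suc n) k = omega n 0 k"
proof (cases "k \<in> RR n")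
  case True
  have "real (Suc n) / (real n + 1) = 1" by simp
  then show ?thesis using True by (simp add: omega_R)
qed (simp add: omega_out)

lemma cyc_step:
  assumes j: "j \<le> n" and k: "k \<in> RR n"
  shows "cyc n j (cyc n 1 k) = cyc n (Suc j) k"
proof -
  have c1: "cyc n 1 k = (if k \<le> 1 then n + 1 else k - 1)" using cyc_eq[of 1 n k] k by auto
  have r: "cyc n 1 k \<in> RR n" using c1 k by auto
  show ?thesis using cyc_eq[OF _ r, of j] cyc_eq[OF _ k, of "Suc j"] c1 j k by auto
qed

lemma sigma_comp:
  assumes n: "n \<ge> 1" and j: "j \<le> n"
  shows "sigma n 1 \<circ> sigma n j = sigma n (Suc j mod (n + 1))"
proof -
  have "sigma n 1 \<circ> sigma n j = Rep n (\<lambda>k. omega n 1 k + pfx n (cyc n 1) (omega n j) k) (cyc n j \<circ> cyc n 1)"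
    unfolding sigma_Rep[OF n j] sigma_Rep[OF n n] by (rule Rep_comp[OF cyc_bij[OF n]])
  also have "\<dots> = Rep n (omega n (Suc j mod (n + 1))) (cyc n (Suc j mod (n + 1)))"
  proof (rule Rep_cong)
    fix k
    show "omega n 1 k + pfx n (cyc n 1) (omega n j) k = omega n (Suc j mod (n + 1)) k"
      using omega_step[OF n j] omega_top[of n k] j
      by (cases "j = n") (auto simp: mod_if)
  next
    fix k assume k: "k \<in> RR n"
    have "cyc n (Suc n) k = cyc n 0 k" using cyc_eq[OF _ k, of "Suc n"] cyc_eq[OF _ k, of 0] k by auto
    then show "(cyc n j \<circ> cyc n 1) k = cyc n (Suc j mod (n + 1)) k"
      using cyc_step[OF j k] j by (cases "j = n") (auto simp: mod_if)
  qed
  also have "\<dots> = sigma n (Suc j mod (n + 1))"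
    by (rule sigma_Rep[OF n, symmetric]) simp
  finally show ?thesis .
qed

definition rhof :: "nat \<Rightarrow> nat \<Rightarrow> real" where
  "rhof n k = (real n + 2 - 2 * real k) / 2"

definition Fq :: "nat \<Rightarrow> (nat \<Rightarrow> real) \<Rightarrow> real" where
  "Fq n g = dot n (\<lambda>k. - g k) (rhof n) + real (n + 1) * (dot n g g / 2)"

lemma h1: fixes x c y r :: real assumes "c * (x + 1) = 1"
  shows "(x+1)/2*((y-c)*(y-c)) - (y-c)*(r-1) = (x+1)/2*(y*y) - y*r + c*(2*r-1)/2"
  using assms by algebra

lemma h2: fixes x c t :: real assumes "c * (x + 1) = 1"
  shows "(x+1)/2*((x*c+t)*(x*c+t)) - (x*c+t)*(x/2) = (x+1)/2*(t*t) - t*(- (x/2))"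
  using assms by algebra

definition Tm :: "nat \<Rightarrow> real \<Rightarrow> nat \<Rightarrow> real" where
  "Tm n x k = real (n + 1) / 2 * (x * x) - x * rhof n k"

lemma L_Rep: "LLam0 n (Rep n g h) = Fq n g"
proof -
  have "Rep n g h Lam0 = (1, g, - (dot n g g / 2))"
    by (simp add: Rep_def Lam0_def pf_def pfx_def transl_def Let_def dot_def)
  moreover have "pfx n h (\<lambda>_. 0) = (\<lambda>_. 0)" by (simp add: pfx_def)
  moreover have "(\<lambda>k. (real n + 2 - 2 * real k) / 2) = rhof n" by (simp add: rhof_def fun_eq_iff)
  ultimately show ?thesis
    by (simp add: LLam0_def rho_pair_def hdiff_def hadd_def hscale_def Lam0_def Fq_def)
qed

lemma Fq_split: "Fq n g = (\<Sum>k\<in>RR n. Tm n (g k) k)"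
proof -
  have a: "(\<Sum>k\<in>RR n. Tm n (g k) k) = real (n+1) / 2 * (\<Sum>k\<in>RR n. g k * g k) - (\<Sum>k\<in>RR n. g k * rhof n k)"
    unfolding Tm_def by (simp only: sum_subtractf sum_distrib_left)
  have b: "dot n (\<lambda>k. - g k) (rhof n) = - (\<Sum>k\<in>RR n. g k * rhof n k)"
    unfolding dot_def by (simp only: mult_minus_left sum_negf)
  have c: "dot n g g = (\<Sum>k\<in>RR n. g k * g k)" unfolding dot_def ..
  show ?thesis unfolding Fq_def a b c by simp
qed

lemma sum_split1: fixes n :: nat shows "(\<Sum>k\<in>{1..n+1}. f k) = f 1 + (\<Sum>m\<in>{1..n}. f (Suc m))"
proof -
  have "{1..n+1} = insert 1 {Suc 1..Suc n}" by auto
  then have "(\<Sum>k\<in>{1..n+1}. f k) = f 1 + (\<Sum>k\<in>{Suc 1..Suc n}. f k)" by simp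
  also have "(\<Sum>k\<in>{Suc 1..Suc n}. f k) = (\<Sum>m\<in>{1..n}. f (Suc m))"
    by (rule sum.shift_bounds_cl_Suc_ivl)
  finally show ?thesis .
qed

lemma sum_split2: fixes n :: nat shows "(\<Sum>k\<in>{1..n+1}. f k) = (\<Sum>m\<in>{1..n}. f m) + f (n+1)"
proof -
  have "{1..n+1} = insert (n+1) {1..n}" by auto
  then show ?thesis by (simp add: add.commute)
qed

lemma gauss_real: "(\<Sum>m\<in>{1..n}. real m) = real n * (real n + 1) / 2"
  by (induction n) (auto simp: field_simps)

lemma sum_lin0: "(\<Sum>m\<in>{1..n}. real n + 1 - 2 * real m) = 0"
proof -
  have "(\<Sum>m\<in>{1..n}. real n + 1 - 2 * real m) = real n * (real n + 1) - 2 * (\<Sum>m\<in>{1..n}. real m)"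
    by (simp add: sum_subtractf sum_distrib_left)
  then show ?thesis using gauss_real[of n] by simp
qed

lemma Fq_inv:
  assumes n: "n \<ge> 1"
  shows "Fq n (\<lambda>k. omega n 1 k + pfx n (cyc n 1) g k) = Fq n g"
proof -
  define c where "c = 1 / (real n + 1)"
  define g' where "g' = (\<lambda>k. omega n 1 k + pfx n (cyc n 1) g k)"
  have cn: "c * (real n + 1) = 1" unfolding c_def by simp
  have R1: "(1::nat) \<in> RR n" by simp
  have c11: "cyc n 1 1 = n + 1" using cyc_eq[of 1 n 1] by simp
  have g1: "g' 1 = 1 - c + g (n + 1)"
    unfolding g'_def c_def using omega_R[OF R1, of 1] c11 by (simp add: pfx_def)
  have gm: "g' (Suc m) = g m - c" if m: "m \<in> {1..n}" for m
  proof -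
    have r: "Suc m \<in> RR n" using m by simp
    have "cyc n 1 (Suc m) = m" using cyc_eq[OF _ r, of 1] m by simp
    then show ?thesis unfolding g'_def c_def using omega_R[OF r, of 1] m r by (simp add: pfx_def)
  qed
  have per: "Tm n (g' (Suc m)) (Suc m) = Tm n (g m) m + c * (real n + 1 - 2 * real m) / 2"
    if m: "m \<in> {1..n}" for m
  proof -
    have rs: "rhof n (Suc m) = rhof n m - 1" by (simp add: rhof_def field_simps)
    have e1: "real (n+1) = real n + 1" by simp
    have e2: "real n + 1 - 2 * real m = 2 * rhof n m - 1" by (simp add: rhof_def)
    have "Tm n (g m - c) (Suc m) = Tm n (g m) m + c * (real n + 1 - 2 * real m) / 2"
      unfolding Tm_def rs e1 e2 by (rule h1[OF cn])
    then show ?thesis using gm[OF m] by simp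
  qed
  have first: "Tm n (g' 1) 1 = Tm n (g (n + 1)) (n + 1)"
  proof -
    have e: "1 - c + g (n + 1) = real n * c + g (n + 1)" using cn by (simp add: algebra_simps)
    have e1: "real (n+1) = real n + 1" by simp
    have r1: "rhof n 1 = real n / 2" by (simp add: rhof_def)
    have r2: "rhof n (n + 1) = - (real n / 2)" by (simp add: rhof_def)
    show ?thesis unfolding g1 Tm_def e e1 r1 r2
      by (rule h2[OF cn])
  qed
  have "(\<Sum>m\<in>{1..n}. Tm n (g' (Suc m)) (Suc m)) = (\<Sum>m\<in>{1..n}. Tm n (g m) m + c * (real n + 1 - 2 * real m) / 2)"
    by (rule sum.cong) (simp_all add: per)
  also have "\<dots> = (\<Sum>m\<in>{1..n}. Tm n (g m) m) + c / 2 * (\<Sum>m\<in>{1..n}. real n + 1 - 2 * real m)"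
    by (simp add: sum.distrib sum_distrib_left sum_divide_distrib)
  also have "\<dots> = (\<Sum>m\<in>{1..n}. Tm n (g m) m)" using sum_lin0[of n] by simp
  finally have mid: "(\<Sum>m\<in>{1..n}. Tm n (g' (Suc m)) (Suc m)) = (\<Sum>m\<in>{1..n}. Tm n (g m) m)" .
  have "Fq n g' = Tm n (g' 1) 1 + (\<Sum>m\<in>{1..n}. Tm n (g' (Suc m)) (Suc m))"
    unfolding Fq_split by (rule sum_split1)
  also have "\<dots> = (\<Sum>m\<in>{1..n}. Tm n (g m) m) + Tm n (g (n + 1)) (n + 1)" using first mid by simp
  also have "\<dots> = Fq n g" unfolding Fq_split by (rule sum_split2[symmetric])
  finally show ?thesis unfolding g'_def .
qed

lemma funpow_in: "(\<forall>x\<in>S. F x \<in> S) \<Longrightarrow> x \<in> S \<Longrightarrow> (F ^^ m) x \<in> S"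
  by (induction m) auto

lemma orbit_dvd:
  fixes F :: "'a \<Rightarrow> 'a"
  assumes p: "p > 0"
  shows "finite S \<Longrightarrow> (\<forall>x\<in>S. F x \<in> S) \<Longrightarrow> (\<forall>x\<in>S. (F ^^ p) x = x) \<Longrightarrow>
    (\<forall>x\<in>S. \<forall>m. 0 < m \<and> m < p \<longrightarrow> (F ^^ m) x \<noteq> x) \<Longrightarrow> p dvd card S"
proof (induction "card S" arbitrary: S rule: less_induct)
  case less
  show ?case
  proof (cases "S = {}")
    case True then show ?thesis by simp
  next
    case False
    then obtain x where x: "x \<in> S" by blast
    define Orb where "Orb = (\<lambda>m. (F ^^ m) x) ` {..<p}"
    have OS: "Orb \<subseteq> S" unfolding Orb_def using funpow_in[OF less.prems(2) x] by auto
    have inj: "inj_on (\<lambda>m. (F ^^ m) x) {..<p}"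
    proof (rule inj_onI)
      fix a b assume a: "a \<in> {..<p}" and b: "b \<in> {..<p}" and e: "(F ^^ a) x = (F ^^ b) x"
      show "a = b"
      proof (rule ccontr)
        assume "a \<noteq> b"
        then consider "a < b" | "b < a" by linarith
        then show False
        proof cases
          case 1
          have "(F ^^ (b - a)) ((F ^^ a) x) = (F ^^ b) x"
          proof -
            have "(F ^^ (b - a)) ((F ^^ a) x) = (F ^^ (b - a + a)) x" by (simp add: funpow_add)
            then show ?thesis using 1 by simp
          qed
          then have "(F ^^ (b - a)) ((F ^^ a) x) = (F ^^ a) x" using e by simp
          moreover have "(F ^^ a) x \<in> S" using funpow_in[OF less.prems(2) x] .
          moreover have "0 < b - a \<and> b - a < p" using 1 b by auto
          ultimately show False using less.prems(4) by blast
        next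
          case 2
          have "(F ^^ (a - b)) ((F ^^ b) x) = (F ^^ a) x"
          proof -
            have "(F ^^ (a - b)) ((F ^^ b) x) = (F ^^ (a - b + b)) x" by (simp add: funpow_add)
            then show ?thesis using 2 by simp
          qed
          then have "(F ^^ (a - b)) ((F ^^ b) x) = (F ^^ b) x" using e by simp
          moreover have "(F ^^ b) x \<in> S" using funpow_in[OF less.prems(2) x] .
          moreover have "0 < a - b \<and> a - b < p" using 2 a by auto
          ultimately show False using less.prems(4) by blast
        qed
      qed
    qed
    have cO: "card Orb = p" unfolding Orb_def using card_image[OF inj] by simp
    define S' where "S' = S - Orb"
    have fS': "finite S'" unfolding S'_def using less.prems(1) by simp
    have cS': "card S' = card S - p" unfolding S'_def using card_Diff_subset[OF _ OS] cO
      less.prems(1) finite_subset[OF OS] by simp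
    have pS: "p \<le> card S" using card_mono[OF less.prems(1) OS] cO by simp
    have lt: "card S' < card S" using cS' pS p by simp
    have cl: "\<forall>y\<in>S'. F y \<in> S'"
    proof
      fix y assume y: "y \<in> S'"
      have yS: "y \<in> S" "y \<notin> Orb" using y unfolding S'_def by auto
      have FyS: "F y \<in> S" using less.prems(2) yS(1) by blast
      show "F y \<in> S'"
      proof (rule ccontr)
        assume "F y \<notin> S'"
        then have "F y \<in> Orb" using FyS unfolding S'_def by blast
        then obtain m where m: "m < p" "F y = (F ^^ m) x" unfolding Orb_def by blast
        have "y = (F ^^ p) y" using less.prems(3) yS(1) by simp
        also have "\<dots> = (F ^^ (p - 1)) (F y)"
        proof -
          have "(F ^^ (p - 1 + 1)) y = (F ^^ (p - 1)) ((F ^^ 1) y)" by (simp only: funpow_add o_apply)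
          moreover have "(F ^^ 1) y = F y" by simp
          moreover have "p - 1 + 1 = p" using p by simp
          ultimately show ?thesis by simp
        qed
        also have "\<dots> = (F ^^ (p - 1 + m)) x" using m(2) by (simp add: funpow_add)
        finally have yy: "y = (F ^^ (p - 1 + m)) x" .
        show False
        proof (cases "m = 0")
          case True
          then have "y \<in> Orb" using yy p unfolding Orb_def by auto
          then show False using yS by blast
        next
          case False
          have "(F ^^ (p - 1 + m)) x = (F ^^ (m - 1)) ((F ^^ p) x)"
          proof -
            have "p - 1 + m = (m - 1) + p" using False p by simp
            then show ?thesis by (simp add: funpow_add)
          qed
          also have "\<dots> = (F ^^ (m - 1)) x" using less.prems(3) x by simp
          finally have "y \<in> Orb" using yy m p unfolding Orb_def by auto
          then show False using yS by blast
        qed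
      qed
    qed
    have "p dvd card S'"
      by (rule less.hyps[OF lt fS' cl]) (use less.prems(3,4) in \<open>auto simp: S'_def\<close>)
    moreover have "card S = card S' + p" using cS' pS by simp
    ultimately show ?thesis by simp
  qed
qed

lemma sigma0: "sigma n 0 = id" by (simp add: sigma_def)

lemma sig1_Rep:
  assumes n: "n \<ge> 1"
  shows "sigma n 1 \<circ> Rep n g h = Rep n (\<lambda>k. omega n 1 k + pfx n (cyc n 1) g k) (h \<circ> cyc n 1)"
  unfolding sigma_Rep[OF n n] by (rule Rep_comp[OF cyc_bij[OF n]])

lemma sig1_L:
  assumes n: "n \<ge> 1"
  shows "LLam0 n (sigma n 1 \<circ> Rep n g h) = LLam0 n (Rep n g h)"
  unfolding sig1_Rep[OF n] L_Rep using Fq_inv[OF n] by simp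

lemma sigma_L:
  assumes n: "n \<ge> 1" and w: "w \<in> Waff n"
  shows "j \<le> n \<Longrightarrow> (\<exists>g h. sigma n j \<circ> w = Rep n g h) \<and> LLam0 n (sigma n j \<circ> w) = LLam0 n w"
proof (induction j)
  case 0
  obtain b g where "w = Rep n b g" using GoodW_Waff[OF n w] unfolding GoodW_def by blast
  then show ?case by (auto simp: sigma0)
next
  case (Suc j)
  have IH: "(\<exists>g h. sigma n j \<circ> w = Rep n g h) \<and> LLam0 n (sigma n j \<circ> w) = LLam0 n w"
    using Suc.IH Suc.prems by (simp add: comp_def)
  then obtain g h where gh: "sigma n j \<circ> w = Rep n g h" and L: "LLam0 n (sigma n j \<circ> w) = LLam0 n w"
    by blast
  have "Suc j mod (n + 1) = Suc j" using Suc.prems by simp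
  then have e: "sigma n (Suc j) = sigma n 1 \<circ> sigma n j" using sigma_comp[OF n, of j] Suc.prems by simp
  have "sigma n (Suc j) \<circ> w = sigma n 1 \<circ> Rep n g h" unfolding e using gh by (simp add: comp_assoc)
  then show ?case using sig1_Rep[OF n, of g h] sig1_L[OF n, of g h] gh L by auto
qed

lemma iter_sigma:
  assumes n: "n \<ge> 1" and j: "j \<le> n"
  shows "((\<lambda>v. sigma n 1 \<circ> v) ^^ m) (sigma n j \<circ> w) = sigma n ((j + m) mod (n + 1)) \<circ> w"
proof (induction m)
  case 0 then show ?case using j by simp
next
  case (Suc m)
  have r: "(j + m) mod (n + 1) \<le> n" by (simp add: less_Suc_eq_le[symmetric])
  have "((\<lambda>v. sigma n 1 \<circ> v) ^^ Suc m) (sigma n j \<circ> w) = sigma n 1 \<circ> (((\<lambda>v. sigma n 1 \<circ> v) ^^ m) (sigma n j \<circ> w))"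
    by (simp only: funpow.simps(2) comp_apply)
  also have "\<dots> = sigma n 1 \<circ> (sigma n ((j + m) mod (n + 1)) \<circ> w)"
    by (simp only: Suc.IH)
  also have "\<dots> = (sigma n 1 \<circ> sigma n ((j + m) mod (n + 1))) \<circ> w" by (simp add: comp_assoc)
  also have "\<dots> = sigma n (Suc ((j + m) mod (n + 1)) mod (n + 1)) \<circ> w" using sigma_comp[OF n r] by simp
  also have "Suc ((j + m) mod (n + 1)) mod (n + 1) = (j + Suc m) mod (n + 1)" by (simp add: mod_Suc_eq)
  finally show ?case .
qed

lemma Rep_Lam0: "Rep n g h Lam0 = (1, g, - (dot n g g / 2))"
  by (simp add: Rep_def Lam0_def pf_def pfx_def transl_def Let_def dot_def)

lemma sigma_distinct:
  assumes n: "n \<ge> 1" and j: "j \<le> n" and k: "k \<le> n" and w: "bij w"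
    and e: "sigma n j \<circ> w = sigma n k \<circ> w"
  shows "j = k"
proof -
  have "sigma n j = sigma n k"
  proof
    fix x
    have "x = w (inv w x)" using w by (simp add: bij_def surj_f_inv_f)
    then show "sigma n j x = sigma n k x" using fun_cong[OF e, of "inv w x"] by simp
  qed
  then have "sigma n j Lam0 = sigma n k Lam0" by simp
  then have "omega n j = omega n k" unfolding sigma_Rep[OF n j] sigma_Rep[OF n k] Rep_Lam0 by simp
  then have "omega n j 1 = omega n k 1" by simp
  then have eq: "(if 1 \<le> j then 1 else 0) - real j / (real n + 1) = (if 1 \<le> k then 1 else 0) - real k / (real n + 1)"
    using omega_R[of 1 n j] omega_R[of 1 n k] by simp
  have np: "real n + 1 > 0" by simp
  have eq2: "(if 1 \<le> j then real n + 1 else 0) - real j = (if 1 \<le> k then real n + 1 else 0) - real k"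
  proof -
    have "((if 1 \<le> j then 1 else 0) - real j / (real n + 1)) * (real n + 1)
        = ((if 1 \<le> k then 1 else 0) - real k / (real n + 1)) * (real n + 1)" using eq by simp
    then show ?thesis using np by (simp add: left_diff_distrib split: if_splits)
  qed
  show ?thesis using eq2 j k by (auto split: if_splits)
qed

lemma mod_ne:
  fixes j m p :: nat
  assumes "j < p" "0 < m" "m < p"
  shows "(j + m) mod p \<noteq> j"
proof (cases "j + m < p")
  case True then show ?thesis using assms by simp
next
  case False
  then have "(j + m) mod p = j + m - p" using assms by (simp add: le_mod_geq)
  then show ?thesis using assms False by arith
qed

lemma Tm_lb:
  assumes k: "k \<in> RR n" and x: "x \<in> \<int>"
  shows "x * x / 2 \<le> Tm n x k"
proof -
  obtain z where z: "x = of_int z" using x by (auto elim: Ints_cases)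
  have ax: "\<bar>x\<bar> \<le> x * x"
  proof (cases "z = 0")
    case True then show ?thesis using z by simp
  next
    case False
    then have "\<bar>z\<bar> \<ge> 1" by linarith
    then have "\<bar>x\<bar> \<ge> 1" using z by simp
    then have "\<bar>x\<bar> * 1 \<le> \<bar>x\<bar> * \<bar>x\<bar>" by (intro mult_left_mono) auto
    then show ?thesis by (simp add: abs_mult_self_eq)
  qed
  have k1: "1 \<le> real k" "real k \<le> real n + 1" using k by auto
  have ar: "\<bar>rhof n k\<bar> \<le> real n / 2" unfolding rhof_def using k1 by (simp add: abs_le_iff)
  have "x * rhof n k \<le> \<bar>x\<bar> * \<bar>rhof n k\<bar>" by (metis abs_ge_self abs_mult)
  also have "\<dots> \<le> \<bar>x\<bar> * (real n / 2)" by (rule mult_left_mono[OF ar]) simp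
  also have "\<dots> \<le> x * x * (real n / 2)" by (rule mult_right_mono[OF ax]) simp
  finally have b: "x * rhof n k \<le> x * x * (real n / 2)" .
  have "Tm n x k = x * x / 2 + x * x * (real n / 2) - x * rhof n k"
    unfolding Tm_def by (simp add: algebra_simps)
  then show ?thesis using b by simp
qed

lemma coord_bound:
  assumes ints: "\<forall>k\<in>RR n. b k \<in> \<int>" and F: "Fq n b = real N" and k: "k \<in> RR n"
  shows "\<bar>b k\<bar> \<le> 2 * real N"
proof -
  have nn: "\<forall>i\<in>RR n. 0 \<le> Tm n (b i) i"
  proof
    fix i assume i: "i \<in> RR n"
    have "0 \<le> b i * b i / 2" by simp
    also have "\<dots> \<le> Tm n (b i) i" using Tm_lb[OF i] ints i by blast
    finally show "0 \<le> Tm n (b i) i" .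
  qed
  have "Tm n (b k) k \<le> (\<Sum>i\<in>RR n. Tm n (b i) i)"
    by (rule member_le_sum[OF k]) (use nn in auto)
  also have "\<dots> = real N" using F Fq_split by simp
  finally have t: "Tm n (b k) k \<le> real N" .
  have "b k * b k / 2 \<le> Tm n (b k) k" using Tm_lb[OF k] ints k by blast
  then have sq: "b k * b k \<le> 2 * real N" using t by simp
  have bk: "b k \<in> \<int>" using ints k by blast
  obtain z where z: "b k = of_int z" using bk by (rule Ints_cases)
  have "\<bar>b k\<bar> \<le> b k * b k"
  proof (cases "z = 0")
    case True then show ?thesis using z by simp
  next
    case False
    then have "\<bar>z\<bar> \<ge> 1" by linarith
    then have "\<bar>b k\<bar> \<ge> 1" using z by simp
    then have "\<bar>b k\<bar> * 1 \<le> \<bar>b k\<bar> * \<bar>b k\<bar>" by (intro mult_left_mono) auto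
    then show ?thesis by (simp add: abs_mult_self_eq)
  qed
  then show ?thesis using sq by simp
qed

lemma Wset_finite:
  assumes n: "n \<ge> 1"
  shows "finite {w \<in> Waff n. LLam0 n w = real N}"
proof -
  define M where "M = int (2 * N)"
  define FS where "FS = {f::nat \<Rightarrow> int. \<forall>x. (x \<in> RR n \<longrightarrow> f x \<in> {-M..M}) \<and> (x \<notin> RR n \<longrightarrow> f x = 0)}"
  define GS where "GS = {g::nat \<Rightarrow> nat. \<forall>x. (x \<in> RR n \<longrightarrow> g x \<in> RR n) \<and> (x \<notin> RR n \<longrightarrow> g x = 0)}"
  define mk where "mk = (\<lambda>(f::nat \<Rightarrow> int, g::nat \<Rightarrow> nat). Rep n (\<lambda>k. if k \<in> RR n then real_of_int (f k) else 0) g)"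
  have sub: "{w \<in> Waff n. LLam0 n w = real N} \<subseteq> mk ` (FS \<times> GS)"
  proof
    fix w assume w: "w \<in> {w \<in> Waff n. LLam0 n w = real N}"
    obtain b g where bg: "w = Rep n b g" "bij_betw g (RR n) (RR n)" "\<forall>k. b k \<in> \<int>"
        "\<forall>k. k \<notin> RR n \<longrightarrow> b k = 0"
      using GoodW_Waff[OF n] w unfolding GoodW_def by blast
    have Fb: "Fq n b = real N" using w bg(1) L_Rep by simp
    define f where "f = (\<lambda>k. if k \<in> RR n then \<lfloor>b k\<rfloor> else 0)"
    define g' where "g' = (\<lambda>k. if k \<in> RR n then g k else 0)"
    have fb: "b k = (if k \<in> RR n then real_of_int (f k) else 0)" for k
    proof (cases "k \<in> RR n")
      case True
      have "b k \<in> \<int>" using bg(3) by blast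
      then obtain z where "b k = of_int z" by (rule Ints_cases)
      then show ?thesis using True by (simp add: f_def)
    qed (use bg(4) in auto)
    have "w = mk (f, g')" unfolding mk_def bg(1)
      by (simp, rule Rep_cong) (auto simp: fb g'_def)
    moreover have "f \<in> FS"
    proof -
      have "\<forall>k\<in>RR n. \<lfloor>b k\<rfloor> \<in> {-M..M}"
      proof
        fix k assume k: "k \<in> RR n"
        have a: "\<bar>b k\<bar> \<le> 2 * real N" using coord_bound[OF _ Fb k] bg(3) by blast
        have "b k \<in> \<int>" using bg(3) by blast
        then obtain z where z: "b k = of_int z" by (rule Ints_cases)
        have "\<bar>z\<bar> \<le> M" using a unfolding z M_def by linarith
        then show "\<lfloor>b k\<rfloor> \<in> {-M..M}" using z by auto
      qed
      then show ?thesis unfolding f_def FS_def by auto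
    qed
    moreover have "g' \<in> GS"
      unfolding g'_def GS_def using bij_betwE[OF bg(2)] by auto
    ultimately show "w \<in> mk ` (FS \<times> GS)" by blast
  qed
  have "finite FS" unfolding FS_def by (rule finite_set_of_finite_funs) auto
  moreover have "finite GS" unfolding GS_def by (rule finite_set_of_finite_funs) auto
  ultimately have "finite (FS \<times> GS)" by simp
  then show ?thesis using finite_subset[OF sub] by blast
qed

theorem corollary4p8:
  fixes n N :: nat
  assumes "n \<ge> 1"
  shows "finite (Bhat n N) \<and> (n + 1) dvd card (Bhat n N)"
proof -
  have n: "n \<ge> 1" by (rule assms)
  define F :: "(hdual \<Rightarrow> hdual) \<Rightarrow> (hdual \<Rightarrow> hdual)" where "F = (\<lambda>v. sigma n 1 \<circ> v)"
  have memB: "\<exists>j w. j \<le> n \<and> w \<in> Wmin n \<and> v = sigma n j \<circ> w \<and> LLam0 n w = real N"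
    if v: "v \<in> Bhat n N" for v
  proof -
    obtain j w where jw: "j \<le> n" "w \<in> Wmin n" "v = sigma n j \<circ> w" "LLam0 n v = real N"
      using v unfolding Bhat_def SigmaW0_def by blast
    have wW: "w \<in> Waff n" using jw(2) unfolding Wmin_def by blast
    have "LLam0 n w = real N" using sigma_L[OF n wW jw(1)] jw(3,4) by simp
    then show ?thesis using jw by blast
  qed
  have fin: "finite (Bhat n N)"
  proof -
    have "Bhat n N \<subseteq> (\<Union>j\<in>{..n}. (\<lambda>w. sigma n j \<circ> w) ` {w \<in> Waff n. LLam0 n w = real N})"
    proof
      fix v assume "v \<in> Bhat n N"
      then obtain j w where jw: "j \<le> n" "w \<in> Wmin n" "v = sigma n j \<circ> w" "LLam0 n w = real N"
        using memB by blast
      have wW: "w \<in> Waff n" using jw(2) unfolding Wmin_def by blast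
      show "v \<in> (\<Union>j\<in>{..n}. (\<lambda>w. sigma n j \<circ> w) ` {w \<in> Waff n. LLam0 n w = real N})"
        using jw wW by blast
    qed
    moreover have "finite (\<Union>j\<in>{..n}. (\<lambda>w. sigma n j \<circ> w) ` {w \<in> Waff n. LLam0 n w = real N})"
      using Wset_finite[OF n] by auto
    ultimately show ?thesis by (rule finite_subset)
  qed
  have it: "(F ^^ m) (sigma n j \<circ> w) = sigma n ((j + m) mod (n + 1)) \<circ> w" if "j \<le> n" for m j w
    unfolding F_def by (rule iter_sigma[OF n that])
  have inB: "sigma n j \<circ> w \<in> Bhat n N" if "j \<le> n" "w \<in> Wmin n" "LLam0 n w = real N" for j w
  proof -
    have wW: "w \<in> Waff n" using that(2) unfolding Wmin_def by blast
    have "LLam0 n (sigma n j \<circ> w) = real N" using sigma_L[OF n wW that(1)] that(3) by simp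
    then show ?thesis unfolding Bhat_def SigmaW0_def using that by blast
  qed
  have cl: "\<forall>x\<in>Bhat n N. F x \<in> Bhat n N"
  proof
    fix v assume "v \<in> Bhat n N"
    then obtain j w where jw: "j \<le> n" "w \<in> Wmin n" "v = sigma n j \<circ> w" "LLam0 n w = real N"
      using memB by blast
    have "F v = (F ^^ 1) v" by simp
    also have "\<dots> = sigma n ((j + 1) mod (n + 1)) \<circ> w" unfolding jw(3) by (rule it[OF jw(1)])
    finally have e: "F v = sigma n ((j + 1) mod (n + 1)) \<circ> w" .
    have "(j + 1) mod (n + 1) \<le> n" by (simp add: less_Suc_eq_le[symmetric])
    then show "F v \<in> Bhat n N" unfolding e using inB jw by blast
  qed
  have per: "\<forall>x\<in>Bhat n N. (F ^^ (n + 1)) x = x"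
  proof
    fix v assume "v \<in> Bhat n N"
    then obtain j w where jw: "j \<le> n" "w \<in> Wmin n" "v = sigma n j \<circ> w" "LLam0 n w = real N"
      using memB by blast
    have "(j + (n + 1)) mod (n + 1) = j mod (n + 1)" by (rule mod_add_self2)
    also have "\<dots> = j" using jw(1) by (intro mod_less) simp
    finally have "(j + (n + 1)) mod (n + 1) = j" .
    then show "(F ^^ (n + 1)) v = v" unfolding jw(3) it[OF jw(1)] by simp
  qed
  have free: "\<forall>x\<in>Bhat n N. \<forall>m. 0 < m \<and> m < n + 1 \<longrightarrow> (F ^^ m) x \<noteq> x"
  proof (intro ballI allI impI)
    fix v m assume v: "v \<in> Bhat n N" and m: "0 < m \<and> m < n + 1"
    obtain j w where jw: "j \<le> n" "w \<in> Wmin n" "v = sigma n j \<circ> w" "LLam0 n w = real N"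
      using memB[OF v] by blast
    have wW: "w \<in> Waff n" using jw(2) unfolding Wmin_def by blast
    have r: "(j + m) mod (n + 1) \<le> n" by (simp add: less_Suc_eq_le[symmetric])
    show "(F ^^ m) v \<noteq> v"
    proof
      assume "(F ^^ m) v = v"
      then have "sigma n ((j + m) mod (n + 1)) \<circ> w = sigma n j \<circ> w" unfolding jw(3) it[OF jw(1)] .
      then have "(j + m) mod (n + 1) = j" by (rule sigma_distinct[OF n r jw(1) bij_Waff[OF n wW]])
      moreover have "(j + m) mod (n + 1) \<noteq> j" by (rule mod_ne) (use jw(1) m in auto)
      ultimately show False by simp
    qed
  qed
  have "(n + 1) dvd card (Bhat n N)"
    by (rule orbit_dvd[of "n + 1" "Bhat n N" F]) (use fin cl per free in auto)
  then show ?thesis using fin by simp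
qed

end
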